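(* Let $R$ be a commutative Noetherian ring with $\dim R=2$ having only finitely many prime ideals of height two. Then $\operatorname{Spec} R$, ordered by inclusion, is a $K$-poset.
   Context: For a poset $U$: $\dim U$ is the supremum of lengths of chains; $L(u)=\{v\le u\}$, $G(u)=\{v\ge u\}$, $L(u)^*=L(u)\setminus\{u\}$, $G(u)^*=G(u)\setminus\{u\}$; height of $u$ is $\dim L(u)$; $H_i$ is the set of nodes of height $i$. For nonempty $A\subseteq U$, $\operatorname{mub}A$ is the set of minimal elements among the common upper bounds of $A$. $[b/c]$ denotes the set of $u$ with $G(u)^*=\{b\}$ and $L(u)^*=\{c\}$. A poset $U$ with $\dim U\le 2$ is a $K$-poset if: (1) $\min U$ and $H_2$ are finite; (2) for distinct $u,v\in\min U$, $\operatorname{mub}\{u,v\}$ is finite; (3) whenever $u>v>w$ for some $v$, $[u/w]$ is infinite. *)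

theory Defs
  imports "HOL-Algebra.Ring_Divisibility" "HOL-Library.Extended_Nat"
begin

text \<open>Posets are given by a carrier set U and an order relation r (assumed to be a
partial order on U). Strict order: r u v and u \<noteq> v.\<close>

definition fin_chains :: "'a set \<Rightarrow> ('a \<Rightarrow> 'a \<Rightarrow> bool) \<Rightarrow> 'a set set" where
  "fin_chains U r = {C. C \<subseteq> U \<and> C \<noteq> {} \<and> finite C \<and> (\<forall>x\<in>C. \<forall>y\<in>C. r x y \<or> r y x)}"

definition pdim :: "'a set \<Rightarrow> ('a \<Rightarrow> 'a \<Rightarrow> bool) \<Rightarrow> enat" where
  "pdim U r = Sup ((\<lambda>C. enat (card C - 1)) ` fin_chains U r)"

definition downset :: "'a set \<Rightarrow> ('a \<Rightarrow> 'a \<Rightarrow> bool) \<Rightarrow> 'a \<Rightarrow> 'a set" where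
  "downset U r u = {v\<in>U. r v u}"

definition upset :: "'a set \<Rightarrow> ('a \<Rightarrow> 'a \<Rightarrow> bool) \<Rightarrow> 'a \<Rightarrow> 'a set" where
  "upset U r u = {v\<in>U. r u v}"

definition pheight :: "'a set \<Rightarrow> ('a \<Rightarrow> 'a \<Rightarrow> bool) \<Rightarrow> 'a \<Rightarrow> enat" where
  "pheight U r u = pdim (downset U r u) r"

definition Hlevel :: "'a set \<Rightarrow> ('a \<Rightarrow> 'a \<Rightarrow> bool) \<Rightarrow> nat \<Rightarrow> 'a set" where
  "Hlevel U r i = {u\<in>U. pheight U r u = enat i}"

definition minset :: "'a set \<Rightarrow> ('a \<Rightarrow> 'a \<Rightarrow> bool) \<Rightarrow> 'a set" where
  "minset U r = {u\<in>U. \<forall>v\<in>U. r v u \<longrightarrow> v = u}"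

definition mub :: "'a set \<Rightarrow> ('a \<Rightarrow> 'a \<Rightarrow> bool) \<Rightarrow> 'a set \<Rightarrow> 'a set" where
  "mub U r A = minset {w\<in>U. \<forall>a\<in>A. r a w} r"

text \<open>[b/c]: nodes u with G(u)* = {b} and L(u)* = {c}.\<close>
definition between :: "'a set \<Rightarrow> ('a \<Rightarrow> 'a \<Rightarrow> bool) \<Rightarrow> 'a \<Rightarrow> 'a \<Rightarrow> 'a set" where
  "between U r b c = {u\<in>U. upset U r u - {u} = {b} \<and> downset U r u - {u} = {c}}"

definition K_poset :: "'a set \<Rightarrow> ('a \<Rightarrow> 'a \<Rightarrow> bool) \<Rightarrow> bool" where
  "K_poset U r \<longleftrightarrow>
     pdim U r \<le> 2 \<and>
     finite (minset U r) \<and> finite (Hlevel U r 2) \<and>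
     (\<forall>u\<in>minset U r. \<forall>v\<in>minset U r. u \<noteq> v \<longrightarrow> finite (mub U r {u, v})) \<and>
     (\<forall>u\<in>U. \<forall>w\<in>U. (\<exists>v\<in>U. r v u \<and> v \<noteq> u \<and> r w v \<and> w \<noteq> v)
        \<longrightarrow> infinite (between U r u w))"

definition Spec :: "('a, 'b) ring_scheme \<Rightarrow> 'a set set" where
  "Spec R = {P. primeideal P R}"

definition krull_dim :: "('a, 'b) ring_scheme \<Rightarrow> enat" where
  "krull_dim R = pdim (Spec R) (\<subseteq>)"

end

theory Submission
  imports Defs "HOL-Algebra.Ideal_Product"
begin

locale cnr = noetherian_ring R + cring R for R (structure)

context cnr
begin

lemma max_ideal_exists:
  assumes "S \<noteq> {}" "\<And>I. I \<in> S \<Longrightarrow> ideal I R"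
  shows "\<exists>M\<in>S. \<forall>X\<in>S. M \<subseteq> X \<longrightarrow> X = M"
proof (rule Zorn_Lemma2)
  show "\<forall>C\<in>chains S. \<exists>U\<in>S. \<forall>X\<in>C. X \<subseteq> U"
  proof
    fix C assume C: "C \<in> chains S"
    then have CS: "C \<subseteq> S" and ch: "\<forall>X\<in>C. \<forall>Y\<in>C. X \<subseteq> Y \<or> Y \<subseteq> X"
      unfolding chains_def chain_subset_def by auto
    show "\<exists>U\<in>S. \<forall>X\<in>C. X \<subseteq> U"
    proof (cases "C = {}")
      case True
      then obtain I where "I \<in> S" using assms(1) by blast
      then show ?thesis using True by blast
    next
      case False
      have "C \<subseteq> {I. ideal I R}" using CS assms(2) by blast
      then have "subset.chain {I. ideal I R} C"
        using ch unfolding subset.chain_def by blast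
      then have "\<Union>C \<in> C" using ideal_chain_is_trivial False by blast
      then show ?thesis using CS by blast
    qed
  qed
qed

lemma set_add_mem: "a \<in> I <+>\<^bsub>R\<^esub> J \<longleftrightarrow> (\<exists>i\<in>I. \<exists>j\<in>J. a = i \<oplus> j)"
  unfolding set_add_def' by auto

lemma set_add_memI: "i \<in> I \<Longrightarrow> j \<in> J \<Longrightarrow> i \<oplus> j \<in> I <+>\<^bsub>R\<^esub> J"
  unfolding set_add_def' by auto

lemma set_add_left: assumes "ideal I R" "ideal J R" shows "I \<subseteq> I <+>\<^bsub>R\<^esub> J"
proof
  fix a assume "a \<in> I"
  then have "a = a \<oplus> \<zero>" using ideal.Icarr[OF assms(1)] by simp
  then show "a \<in> I <+>\<^bsub>R\<^esub> J" using set_add_memI[OF \<open>a\<in>I\<close> additive_subgroup.zero_closed[OF ideal.axioms(1)[OF assms(2)]]] by simp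
qed

lemma set_add_right: assumes "ideal I R" "ideal J R" shows "J \<subseteq> I <+>\<^bsub>R\<^esub> J"
proof
  fix a assume "a \<in> J"
  then have "a = \<zero> \<oplus> a" using ideal.Icarr[OF assms(2)] by simp
  then show "a \<in> I <+>\<^bsub>R\<^esub> J" using set_add_memI[OF additive_subgroup.zero_closed[OF ideal.axioms(1)[OF assms(1)]] \<open>a\<in>J\<close>] by simp
qed

lemma set_add_mono': "I \<subseteq> I' \<Longrightarrow> J \<subseteq> J' \<Longrightarrow> I <+>\<^bsub>R\<^esub> J \<subseteq> I' <+>\<^bsub>R\<^esub> J'"
  unfolding set_add_def' by auto

lemma set_add_least: assumes "ideal K R" "I \<subseteq> K" "J \<subseteq> K" shows "I <+>\<^bsub>R\<^esub> J \<subseteq> K"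
  using assms unfolding set_add_def' by (auto intro: additive_subgroup.a_closed[OF ideal.axioms(1)[OF assms(1)]])

definition sat :: "'a set \<Rightarrow> 'a set \<Rightarrow> 'a set" where
  "sat P X = {a \<in> carrier R. \<exists>s\<in>carrier R - P. s \<otimes> a \<in> X}"

lemma sat_ideal: assumes "primeideal P R" "ideal X R" shows "ideal (sat P X) R"
proof (rule idealI)
  show "ring R" by (rule ring_axioms)
  have Xc: "X \<subseteq> carrier R" using ideal.Icarr[OF assms(2)] by blast
  have Pc: "P \<subseteq> carrier R" using ideal.Icarr[OF primeideal.axioms(1)[OF assms(1)]] by blast
  have nP: "s \<otimes> t \<in> carrier R - P" if "s \<in> carrier R - P" "t \<in> carrier R - P" for s t
    using that primeideal.I_prime[OF assms(1)] by auto
  show "subgroup (sat P X) (add_monoid R)"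
  proof (rule subgroup.intro)
    show "sat P X \<subseteq> carrier (add_monoid R)" unfolding sat_def by auto
    show "\<one>\<^bsub>add_monoid R\<^esub> \<in> sat P X"
    proof -
      have "\<one> \<notin> P" using assms(1) ideal.one_imp_carrier primeideal.axioms(1) primeideal.I_notcarr by metis
      moreover have "\<one> \<otimes> \<zero> \<in> X" using additive_subgroup.zero_closed[OF ideal.axioms(1)[OF assms(2)]] by simp
      ultimately show ?thesis unfolding sat_def by auto
    qed
    fix a b assume a: "a \<in> sat P X" and b: "b \<in> sat P X"
    then obtain s t where s: "s \<in> carrier R - P" "s \<otimes> a \<in> X" and t: "t \<in> carrier R - P" "t \<otimes> b \<in> X"
      and ac: "a \<in> carrier R" and bc: "b \<in> carrier R" unfolding sat_def by auto
    have "(s \<otimes> t) \<otimes> (a \<oplus> b) = t \<otimes> (s \<otimes> a) \<oplus> s \<otimes> (t \<otimes> b)"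
      using s t ac bc by (simp add: r_distr m_ac)
    moreover have "t \<otimes> (s \<otimes> a) \<in> X" "s \<otimes> (t \<otimes> b) \<in> X"
      using s t ideal.I_l_closed[OF assms(2)] by auto
    ultimately have "(s \<otimes> t) \<otimes> (a \<oplus> b) \<in> X"
      using additive_subgroup.a_closed[OF ideal.axioms(1)[OF assms(2)]] by metis
    then show "a \<otimes>\<^bsub>add_monoid R\<^esub> b \<in> sat P X" unfolding sat_def using nP[OF s(1) t(1)] ac bc by auto
    have "s \<otimes> (\<ominus> a) = \<ominus> (s \<otimes> a)" using s ac by (simp add: r_minus)
    then have "s \<otimes> (\<ominus> a) \<in> X" using s additive_subgroup.a_inv_closed[OF ideal.axioms(1)[OF assms(2)]] by metis
    then show "inv\<^bsub>add_monoid R\<^esub> a \<in> sat P X" unfolding sat_def using s ac by (auto simp: a_inv_def[symmetric])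
  qed
  fix a x assume a: "a \<in> sat P X" and x: "x \<in> carrier R"
  then obtain s where s: "s \<in> carrier R - P" "s \<otimes> a \<in> X" and ac: "a \<in> carrier R" unfolding sat_def by auto
  have "s \<otimes> (x \<otimes> a) = x \<otimes> (s \<otimes> a)" using s x ac by (simp add: m_ac)
  then have "s \<otimes> (x \<otimes> a) \<in> X" using ideal.I_l_closed[OF assms(2) s(2) x] by simp
  then show "x \<otimes> a \<in> sat P X" unfolding sat_def using s x ac by auto
  then show "a \<otimes> x \<in> sat P X" using x ac by (simp add: m_comm)
qed

lemma sat_incl: assumes "primeideal P R" "ideal X R" shows "X \<subseteq> sat P X"
proof
  fix a assume "a \<in> X"
  moreover have "\<one> \<notin> P" using assms(1) ideal.one_imp_carrier primeideal.axioms(1) primeideal.I_notcarr by metis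
  ultimately show "a \<in> sat P X" unfolding sat_def using ideal.Icarr[OF assms(2)] by (auto intro!: bexI[of _ \<one>])
qed

lemma sat_mono: "X \<subseteq> Y \<Longrightarrow> sat P X \<subseteq> sat P Y"
  unfolding sat_def by auto

lemma sat_sat: assumes "primeideal P R" shows "sat P (sat P X) \<subseteq> sat P X"
proof
  fix a assume "a \<in> sat P (sat P X)"
  then obtain s t where "s \<in> carrier R - P" "t \<in> carrier R - P" "t \<otimes> (s \<otimes> a) \<in> X" "a \<in> carrier R"
    unfolding sat_def by auto
  moreover have "t \<otimes> s \<in> carrier R - P" using calculation primeideal.I_prime[OF assms] by auto
  ultimately show "a \<in> sat P X" unfolding sat_def by (auto simp: m_assoc intro!: bexI[of _ "t \<otimes> s"])
qed

lemma sat_one: assumes "primeideal P R" "X \<subseteq> P" shows "\<one> \<notin> sat P X"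
  using assms unfolding sat_def by auto

lemma sat_carrier: assumes "primeideal P R" "ideal X R" "\<not> X \<subseteq> P" shows "sat P X = carrier R"
proof -
  obtain s where "s \<in> X" "s \<notin> P" using assms by auto
  have "a \<in> sat P X" if "a \<in> carrier R" for a
  proof -
    have "s \<otimes> a \<in> X" using ideal.I_r_closed[OF assms(2) \<open>s\<in>X\<close> that] .
    then show ?thesis unfolding sat_def using that \<open>s\<notin>P\<close> ideal.Icarr[OF assms(2) \<open>s\<in>X\<close>] by blast
  qed
  then show ?thesis unfolding sat_def by blast
qed


lemma Pc: assumes P: "primeideal P R" shows "P \<subseteq> carrier R"
proof
  fix x assume "x \<in> P" then show "x \<in> carrier R" by (rule ideal.Icarr[OF primeideal.axioms(1)[OF P]])
qed

lemma nP_mult: "primeideal P R \<Longrightarrow> s \<in> carrier R - P \<Longrightarrow> t \<in> carrier R - P \<Longrightarrow> s \<otimes> t \<in> carrier R - P"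
proof -
  assume P: "primeideal P R" and s: "s \<in> carrier R - P" and t: "t \<in> carrier R - P"
  have "s \<otimes> t \<notin> P"
  proof
    assume "s \<otimes> t \<in> P"
    then have "s \<in> P \<or> t \<in> P" using primeideal.I_prime[OF P, of s t] s t by simp
    then show False using s t by simp
  qed
  then show ?thesis using s t by simp
qed

lemma one_nP: "primeideal P R \<Longrightarrow> \<one> \<in> carrier R - P"
proof -
  assume P: "primeideal P R"
  have "\<one> \<notin> P"
  proof
    assume "\<one> \<in> P"
    then have "P = carrier R" by (rule ideal.one_imp_carrier[OF primeideal.axioms(1)[OF P]])
    then show False using primeideal.I_notcarr[OF P] by simp
  qed
  then show ?thesis by simp
qed

definition good :: "'a set \<Rightarrow> 'a set \<Rightarrow> 'a set \<Rightarrow> bool" where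
  "good P J K \<longleftrightarrow> (\<forall>I::nat \<Rightarrow> 'a set. (\<forall>n. ideal (I n) R \<and> J \<subseteq> I n \<and> I n \<subseteq> sat P K) \<and> (\<forall>n. I (Suc n) \<subseteq> I n)
      \<longrightarrow> (\<exists>n. \<forall>m\<ge>n. I n \<subseteq> sat P (I m)))"

lemma good_cong: "sat P K = sat P K' \<Longrightarrow> good P J K = good P J K'"
  unfolding good_def by simp

lemma good_J: assumes "primeideal P R" shows "good P J J"
  unfolding good_def
proof (intro allI impI)
  fix I :: "nat \<Rightarrow> 'a set" assume H: "(\<forall>n. ideal (I n) R \<and> J \<subseteq> I n \<and> I n \<subseteq> sat P J) \<and> (\<forall>n. I (Suc n) \<subseteq> I n)"
  have "I 0 \<subseteq> sat P (I m)" for m using H sat_mono[of J "I m" P] by blast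
  then show "\<exists>n. \<forall>m\<ge>n. I n \<subseteq> sat P (I m)" by blast
qed

lemma antimono_chain: "(\<forall>n. I (Suc n) \<subseteq> I n) \<Longrightarrow> n \<le> m \<Longrightarrow> I m \<subseteq> I n"
  by (rule lift_Suc_antimono_le[of I]) auto

lemma ideal_closed_ops:
  assumes "ideal X R"
  shows "a \<in> X \<Longrightarrow> b \<in> X \<Longrightarrow> a \<oplus> b \<in> X"
    and "a \<in> X \<Longrightarrow> \<ominus> a \<in> X"
    and "a \<in> X \<Longrightarrow> x \<in> carrier R \<Longrightarrow> x \<otimes> a \<in> X"
    and "a \<in> X \<Longrightarrow> x \<in> carrier R \<Longrightarrow> a \<otimes> x \<in> X"
    and "\<zero> \<in> X"
    and "a \<in> X \<Longrightarrow> a \<in> carrier R"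
  apply (rule additive_subgroup.a_closed[OF ideal.axioms(1)[OF assms]], assumption, assumption)
  apply (rule additive_subgroup.a_inv_closed[OF ideal.axioms(1)[OF assms]], assumption)
  apply (rule ideal.I_l_closed[OF assms], assumption, assumption)
  apply (rule ideal.I_r_closed[OF assms], assumption, assumption)
  apply (rule additive_subgroup.zero_closed[OF ideal.axioms(1)[OF assms]])
  apply (rule ideal.Icarr[OF assms], assumption)
  done

lemma good_ext:
  assumes P: "primeideal P R" and J: "ideal J R" and K: "ideal K R" and JK: "J \<subseteq> K"
    and gd: "good P J K" and g: "g \<in> carrier R" and rg: "\<forall>r\<in>P. r \<otimes> g \<in> sat P K"
  shows "good P J (K <+>\<^bsub>R\<^esub> PIdl g)"
  unfolding good_def
proof (intro allI impI)
  fix I :: "nat \<Rightarrow> 'a set"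
  let ?K' = "K <+>\<^bsub>R\<^esub> PIdl g"
  assume H: "(\<forall>n. ideal (I n) R \<and> J \<subseteq> I n \<and> I n \<subseteq> sat P ?K') \<and> (\<forall>n. I (Suc n) \<subseteq> I n)"
  have Iid: "ideal (I n) R" and JI: "J \<subseteq> I n" and Isat: "I n \<subseteq> sat P ?K'" for n
    using H by auto
  have Hdec: "\<forall>n. I (Suc n) \<subseteq> I n" using H by auto
  have dec: "n \<le> m \<Longrightarrow> I m \<subseteq> I n" for n m using antimono_chain[OF Hdec] by simp
  have satK: "ideal (sat P K) R" using sat_ideal[OF P K] .
  define I' where "I' n = I n \<inter> sat P K" for n
  have "\<exists>n. \<forall>m\<ge>n. I' n \<subseteq> sat P (I' m)"
  proof -
    have "ideal (I' n) R \<and> J \<subseteq> I' n \<and> I' n \<subseteq> sat P K" for n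
    proof (intro conjI)
      show "ideal (I' n) R" unfolding I'_def by (rule i_intersect[OF Iid satK])
      have "J \<subseteq> sat P K" using JK sat_incl[OF P K] by (rule order_trans)
      then show "J \<subseteq> I' n" unfolding I'_def using JI[of n] by (rule Int_greatest[rotated])
      show "I' n \<subseteq> sat P K" unfolding I'_def by (rule Int_lower2)
    qed
    moreover have "I' (Suc n) \<subseteq> I' n" for n unfolding I'_def using Hdec by auto
    ultimately show ?thesis using gd[unfolded good_def, rule_format, of I'] by auto
  qed
  then obtain n1 where n1: "\<And>m. m \<ge> n1 \<Longrightarrow> I' n1 \<subseteq> sat P (I' m)" by blast
  have KF: "\<exists>t\<in>carrier R - P. \<exists>b\<in>I m. \<exists>k\<in>K. t \<otimes> g = b \<oplus> k"
    if a: "a \<in> I m" "a \<notin> sat P K" for a m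
  proof -
    from a(1) Isat[of m] have "a \<in> sat P ?K'" by (rule subsetD[rotated])
    then obtain s where s: "s \<in> carrier R - P" "s \<otimes> a \<in> ?K'" and ac: "a \<in> carrier R"
      unfolding sat_def by auto
    then obtain k c where k: "k \<in> K" and c: "c \<in> PIdl g" and sa: "s \<otimes> a = k \<oplus> c"
      unfolding set_add_mem by blast
    from c obtain r where r: "r \<in> carrier R" and cr: "c = r \<otimes> g" unfolding cgenideal_def by blast
    have kc: "k \<in> carrier R" using k K ideal_closed_ops(6) by blast
    show ?thesis
    proof (cases "r \<in> P")
      case True
      then obtain s' where s': "s' \<in> carrier R - P" "s' \<otimes> (r \<otimes> g) \<in> K" using rg unfolding sat_def by blast
      have "(s' \<otimes> s) \<otimes> a = s' \<otimes> k \<oplus> s' \<otimes> (r \<otimes> g)"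
        using s s' ac sa cr kc r g by (simp add: m_assoc r_distr)
      moreover have "s' \<otimes> k \<in> K" using ideal_closed_ops(3)[OF K k] s' by blast
      ultimately have "(s' \<otimes> s) \<otimes> a \<in> K" using ideal_closed_ops(1)[OF K] s' by metis
      then have "a \<in> sat P K" unfolding sat_def using nP_mult[OF P s'(1) s(1)] ac by blast
      then show ?thesis using a by blast
    next
      case False
      have rgc: "r \<otimes> g \<in> carrier R" using r g by simp
      have "s \<otimes> a \<oplus> \<ominus> k = (k \<oplus> r \<otimes> g) \<oplus> \<ominus> k" using sa cr by simp
      also have "\<dots> = k \<oplus> (r \<otimes> g \<oplus> \<ominus> k)" using kc rgc by (simp add: a_assoc)
      also have "\<dots> = r \<otimes> g \<oplus> (k \<oplus> \<ominus> k)" using kc rgc by (simp add: a_lcomm)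
      also have "\<dots> = r \<otimes> g" using kc rgc by (simp add: r_neg)
      finally have "r \<otimes> g = s \<otimes> a \<oplus> \<ominus> k" by simp
      moreover have "s \<otimes> a \<in> I m" using ideal_closed_ops(3)[OF Iid a(1)] s by blast
      moreover have "\<ominus> k \<in> K" using ideal_closed_ops(2)[OF K k] .
      ultimately show ?thesis using False r by blast
    qed
  qed
  show "\<exists>n. \<forall>m\<ge>n. I n \<subseteq> sat P (I m)"
  proof (cases "\<forall>m. \<exists>t\<in>carrier R - P. \<exists>b\<in>I m. \<exists>k\<in>K. t \<otimes> g = b \<oplus> k")
    case True
    have "I n1 \<subseteq> sat P (I m)" if m: "m \<ge> n1" for m
    proof
      fix a assume a: "a \<in> I n1"
      then have ac: "a \<in> carrier R" using ideal_closed_ops(6)[OF Iid] by blast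
      from True have "\<exists>t\<in>carrier R - P. \<exists>b\<in>I m. \<exists>k\<in>K. t \<otimes> g = b \<oplus> k" by (rule spec)
      then obtain t b k where t: "t \<in> carrier R - P" and b: "b \<in> I m" and k: "k \<in> K"
        and tg: "t \<otimes> g = b \<oplus> k" by auto
      from a Isat[of n1] have "a \<in> sat P ?K'" by (rule subsetD[rotated])
      then obtain s where s: "s \<in> carrier R - P" "s \<otimes> a \<in> ?K'"
        unfolding sat_def by auto
      then obtain k' c where k': "k' \<in> K" and c: "c \<in> PIdl g" and sa: "s \<otimes> a = k' \<oplus> c"
        unfolding set_add_mem by blast
      from c obtain r where r: "r \<in> carrier R" and cr: "c = r \<otimes> g" unfolding cgenideal_def by blast
      have kc: "k \<in> carrier R" "k' \<in> carrier R" using k k' K ideal_closed_ops(6) by blast+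
      have bc: "b \<in> carrier R" using b ideal_closed_ops(6)[OF Iid] by blast
      define l where "l = t \<otimes> k' \<oplus> r \<otimes> k"
      have lc: "l \<in> carrier R" unfolding l_def using t kc r by simp
      have eq: "t \<otimes> (s \<otimes> a) = l \<oplus> r \<otimes> b"
      proof -
        have "t \<otimes> (s \<otimes> a) = t \<otimes> k' \<oplus> r \<otimes> (t \<otimes> g)"
          using sa cr t s kc r g by (simp add: r_distr m_lcomm)
        also have "\<dots> = t \<otimes> k' \<oplus> (r \<otimes> b \<oplus> r \<otimes> k)" using tg r bc kc by (simp add: r_distr)
        also have "\<dots> = l \<oplus> r \<otimes> b" unfolding l_def using t kc r bc by (simp add: a_ac)
        finally show ?thesis .
      qed
      have lK: "l \<in> K" unfolding l_def
        using ideal_closed_ops(1)[OF K ideal_closed_ops(3)[OF K k'] ideal_closed_ops(3)[OF K k]] t r by simp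
      have rbc: "r \<otimes> b \<in> carrier R" using r bc by simp
      have "t \<otimes> (s \<otimes> a) \<oplus> \<ominus> (r \<otimes> b) = (l \<oplus> r \<otimes> b) \<oplus> \<ominus> (r \<otimes> b)" using eq by simp
      also have "\<dots> = l \<oplus> (r \<otimes> b \<oplus> \<ominus> (r \<otimes> b))" using lc rbc by (simp add: a_assoc)
      also have "\<dots> = l" using lc rbc by (simp add: r_neg)
      finally have "l = t \<otimes> (s \<otimes> a) \<oplus> \<ominus> (r \<otimes> b)" by simp
      moreover have "t \<otimes> (s \<otimes> a) \<in> I n1" using ideal_closed_ops(3)[OF Iid ideal_closed_ops(3)[OF Iid a]] t s by simp
      moreover have "r \<otimes> b \<in> I n1" using ideal_closed_ops(3)[OF Iid, of b n1 r] dec[OF m] b r by auto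
      ultimately have "l \<in> I n1" using ideal_closed_ops(1)[OF Iid _ ideal_closed_ops(2)[OF Iid]] by simp
      then have "l \<in> I' n1" unfolding I'_def using lK sat_incl[OF P K] by blast
      then have "l \<in> sat P (I' m)" using n1[OF m] by (rule subsetD[rotated])
      then obtain t2 where t2: "t2 \<in> carrier R - P" "t2 \<otimes> l \<in> I' m"
        unfolding sat_def by auto
      have "t2 \<otimes> (t \<otimes> (s \<otimes> a)) = t2 \<otimes> l \<oplus> t2 \<otimes> (r \<otimes> b)"
        using eq t2 lc r bc by (simp add: r_distr)
      moreover have "t2 \<otimes> l \<in> I m" using t2 unfolding I'_def by simp
      moreover have "t2 \<otimes> (r \<otimes> b) \<in> I m" using ideal_closed_ops(3)[OF Iid ideal_closed_ops(3)[OF Iid b]] t2 r by simp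
      ultimately have "t2 \<otimes> (t \<otimes> (s \<otimes> a)) \<in> I m" using ideal_closed_ops(1)[OF Iid] by simp
      then have "(t2 \<otimes> t \<otimes> s) \<otimes> a \<in> I m" using t2 t s ac by (simp add: m_assoc)
      moreover have "t2 \<otimes> t \<otimes> s \<in> carrier R - P" using nP_mult[OF P nP_mult[OF P t2(1) t] s(1)] .
      ultimately show "a \<in> sat P (I m)" unfolding sat_def using ac by auto
    qed
    then show ?thesis by blast
  next
    case False
    then obtain m0 where m0: "\<not> (\<exists>t\<in>carrier R - P. \<exists>b\<in>I m0. \<exists>k\<in>K. t \<otimes> g = b \<oplus> k)" by blast
    then have Im0: "I m0 \<subseteq> sat P K" using KF by blast
    have "I (max n1 m0) \<subseteq> sat P (I m)" if m: "m \<ge> max n1 m0" for m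
    proof
      fix a assume a: "a \<in> I (max n1 m0)"
      then have "a \<in> I' n1" unfolding I'_def using dec[of n1 "max n1 m0"] dec[of m0 "max n1 m0"] Im0 by auto
      then have "a \<in> sat P (I' m)" using n1 m by auto
      then show "a \<in> sat P (I m)" using sat_mono[of "I' m" "I m" P] unfolding I'_def by blast
    qed
    then show ?thesis by blast
  qed
qed

definition colon :: "'a set \<Rightarrow> 'a \<Rightarrow> 'a set" where
  "colon X a = {b \<in> carrier R. b \<otimes> a \<in> X}"

lemma colon_ideal: assumes "ideal X R" "a \<in> carrier R" shows "ideal (colon X a) R"
proof (rule idealI)
  show "ring R" by (rule ring_axioms)
  show "subgroup (colon X a) (add_monoid R)"
  proof (rule subgroup.intro)
    show "colon X a \<subseteq> carrier (add_monoid R)" unfolding colon_def by auto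
    show "\<one>\<^bsub>add_monoid R\<^esub> \<in> colon X a" unfolding colon_def using assms ideal_closed_ops(5)[OF assms(1)] by simp
    fix b c assume b: "b \<in> colon X a" and c: "c \<in> colon X a"
    then have "(b \<oplus> c) \<otimes> a = b \<otimes> a \<oplus> c \<otimes> a" using assms(2) unfolding colon_def by (simp add: l_distr)
    then show "b \<otimes>\<^bsub>add_monoid R\<^esub> c \<in> colon X a" using b c ideal_closed_ops(1)[OF assms(1)] unfolding colon_def by auto
    have "(\<ominus> b) \<otimes> a = \<ominus> (b \<otimes> a)" using b assms(2) unfolding colon_def by (simp add: l_minus)
    then show "inv\<^bsub>add_monoid R\<^esub> b \<in> colon X a" using b ideal_closed_ops(2)[OF assms(1)] unfolding colon_def
      by (auto simp: a_inv_def[symmetric])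
  qed
  fix b x assume b: "b \<in> colon X a" and x: "x \<in> carrier R"
  then have "(x \<otimes> b) \<otimes> a = x \<otimes> (b \<otimes> a)" using assms(2) unfolding colon_def by (simp add: m_assoc)
  then show "x \<otimes> b \<in> colon X a" using b x ideal_closed_ops(3)[OF assms(1)] unfolding colon_def by auto
  then show "b \<otimes> x \<in> colon X a" using b x unfolding colon_def by (simp add: m_comm)
qed

lemma assoc_prime:
  assumes P: "primeideal P R" and J: "ideal J R"
    and minP: "\<And>Q. primeideal Q R \<Longrightarrow> J \<subseteq> Q \<Longrightarrow> Q \<subseteq> P \<Longrightarrow> Q = P"
    and K: "ideal K R" and JK: "J \<subseteq> K" and KP: "K \<subseteq> P"
  shows "\<exists>g\<in>carrier R. g \<notin> sat P K \<and> (\<forall>r\<in>P. r \<otimes> g \<in> sat P K)"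
proof -
  let ?X = "sat P K"
  have X: "ideal ?X R" using sat_ideal[OF P K] .
  let ?S = "{colon ?X a | a. a \<in> carrier R \<and> a \<notin> ?X}"
  have "\<one> \<notin> ?X" using sat_one[OF P KP] .
  then have "?S \<noteq> {}" by blast
  moreover have "\<And>I. I \<in> ?S \<Longrightarrow> ideal I R" using colon_ideal[OF X] by blast
  ultimately obtain C where C: "C \<in> ?S" and Cmax: "\<forall>Y\<in>?S. C \<subseteq> Y \<longrightarrow> Y = C"
    using max_ideal_exists by meson
  then obtain a where a: "a \<in> carrier R" "a \<notin> ?X" and Ca: "C = colon ?X a" by blast
  have Cid: "ideal C R" using colon_ideal[OF X a(1)] Ca by simp
  have Cprime: "primeideal C R"
  proof (rule primeidealI[OF Cid is_cring])
    show "carrier R \<noteq> C"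
    proof
      assume "carrier R = C"
      then have "\<one> \<in> C" by (metis one_closed)
      then show False using a unfolding Ca colon_def by simp
    qed
    fix b c assume b: "b \<in> carrier R" and c: "c \<in> carrier R" and bc: "b \<otimes> c \<in> C"
    show "b \<in> C \<or> c \<in> C"
    proof (cases "b \<in> C")
      case True then show ?thesis by simp
    next
      case False then have nb: "b \<notin> C" .
      have ba: "b \<otimes> a \<in> carrier R" "b \<otimes> a \<notin> ?X" using nb b a unfolding Ca colon_def by auto
      have sub: "C \<subseteq> colon ?X (b \<otimes> a)"
      proof
        fix y assume "y \<in> C"
        then have "y \<in> carrier R" "y \<otimes> a \<in> ?X" unfolding Ca colon_def by auto
        moreover have "y \<otimes> (b \<otimes> a) = b \<otimes> (y \<otimes> a)" using calculation b a by (simp add: m_lcomm)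
        ultimately show "y \<in> colon ?X (b \<otimes> a)" unfolding colon_def using ideal_closed_ops(3)[OF X] b by auto
      qed
      have "colon ?X (b \<otimes> a) \<in> ?S" using ba by blast
      then have eqC: "colon ?X (b \<otimes> a) = C" using Cmax sub by blast
      have "c \<otimes> (b \<otimes> a) = (b \<otimes> c) \<otimes> a" using b c a by (simp add: m_ac)
      then have "c \<in> colon ?X (b \<otimes> a)" using bc c unfolding Ca colon_def by auto
      then show ?thesis using eqC by simp
    qed
  qed
  have CP: "C \<subseteq> P"
  proof
    fix t assume t: "t \<in> C"
    show "t \<in> P"
    proof (rule ccontr)
      assume tP: "t \<notin> P"
      have tc: "t \<in> carrier R" "t \<otimes> a \<in> ?X" using t unfolding Ca colon_def by auto
      then obtain s where s: "s \<in> carrier R - P" "s \<otimes> (t \<otimes> a) \<in> K" unfolding sat_def by blast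
      have "(s \<otimes> t) \<otimes> a \<in> K" using s tc a by (simp add: m_assoc)
      moreover have "s \<otimes> t \<in> carrier R - P" using nP_mult[OF P s(1)] tc tP by blast
      ultimately have "a \<in> ?X" unfolding sat_def using a by blast
      then show False using a by blast
    qed
  qed
  have JC: "J \<subseteq> C"
  proof
    fix y assume "y \<in> J"
    then have "y \<in> ?X" "y \<in> carrier R" using JK sat_incl[OF P K] ideal_closed_ops(6)[OF J] by blast+
    then show "y \<in> C" unfolding Ca colon_def using ideal_closed_ops(4)[OF X _ a(1)] by blast
  qed
  have "C = P" using minP[OF Cprime JC CP] .
  then have "\<forall>r\<in>P. r \<otimes> a \<in> ?X" unfolding Ca colon_def by blast
  then show ?thesis using a by blast
qed

lemma good_carrier:
  assumes P: "primeideal P R" and J: "ideal J R"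
    and minP: "\<And>Q. primeideal Q R \<Longrightarrow> J \<subseteq> Q \<Longrightarrow> Q \<subseteq> P \<Longrightarrow> Q = P"
  shows "good P J (carrier R)"
proof -
  let ?S = "{K. ideal K R \<and> J \<subseteq> K \<and> good P J K}"
  have "J \<in> ?S" using J good_J[OF P] by blast
  then obtain K where K: "K \<in> ?S" and Kmax: "\<forall>Y\<in>?S. K \<subseteq> Y \<longrightarrow> Y = K"
    using max_ideal_exists[of ?S] by blast
  have Kid: "ideal K R" and JK: "J \<subseteq> K" and gK: "good P J K" using K by auto
  show ?thesis
  proof (cases "K \<subseteq> P")
    case False
    have "sat P K = sat P (carrier R)"
      using sat_carrier[OF P Kid False] sat_carrier[OF P oneideal] one_nP[OF P] by blast
    then show ?thesis using gK good_cong by blast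
  next
    case True
    obtain g where g: "g \<in> carrier R" "g \<notin> sat P K" "\<forall>r\<in>P. r \<otimes> g \<in> sat P K"
      using assoc_prime[OF P J minP Kid JK True] by blast
    let ?K' = "K <+>\<^bsub>R\<^esub> PIdl g"
    have K'id: "ideal ?K' R" using add_ideals[OF Kid cgenideal_ideal[OF g(1)]] .
    have KK': "K \<subseteq> ?K'" using set_add_left[OF Kid cgenideal_ideal[OF g(1)]] .
    have "good P J ?K'" using good_ext[OF P J Kid JK gK g(1) g(3)] .
    then have "?K' \<in> ?S" using K'id JK KK' by blast
    then have "?K' = K" using Kmax KK' by blast
    moreover have "g \<in> ?K'" using set_add_right[OF Kid cgenideal_ideal[OF g(1)]] cgenideal_self[OF g(1)] by blast
    ultimately have "g \<in> K" by simp
    then show ?thesis using g(2) sat_incl[OF P Kid] by blast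
  qed
qed

end


context cnr
begin

lemma set_add_E:
  assumes "a \<in> I <+>\<^bsub>R\<^esub> J" obtains i j where "i \<in> I" "j \<in> J" "a = i \<oplus> j"
  using assms unfolding set_add_def' by auto

lemma Idl_empty: "Idl {} = {\<zero>}"
proof
  show "Idl {} \<subseteq> {\<zero>}" by (rule genideal_minimal[OF zeroideal]) simp
  show "{\<zero>} \<subseteq> Idl {}" using ideal_closed_ops(5)[OF genideal_ideal[of "{}"]] by simp
qed

lemma Idl_insert:
  assumes S: "S \<subseteq> carrier R" and m: "m \<in> carrier R"
  shows "Idl (insert m S) = Idl S <+>\<^bsub>R\<^esub> PIdl m"
proof
  have I1: "ideal (Idl S) R" using genideal_ideal[OF S] .
  have I2: "ideal (PIdl m) R" using cgenideal_ideal[OF m] .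
  have I3: "ideal (Idl S <+>\<^bsub>R\<^esub> PIdl m) R" using add_ideals[OF I1 I2] .
  have "m \<in> Idl S <+>\<^bsub>R\<^esub> PIdl m" using set_add_right[OF I1 I2] cgenideal_self[OF m] by auto
  moreover have "S \<subseteq> Idl S <+>\<^bsub>R\<^esub> PIdl m" using set_add_left[OF I1 I2] genideal_self[OF S] by auto
  ultimately have "insert m S \<subseteq> Idl S <+>\<^bsub>R\<^esub> PIdl m" by auto
  then show "Idl (insert m S) \<subseteq> Idl S <+>\<^bsub>R\<^esub> PIdl m" by (rule genideal_minimal[OF I3])
  have S': "insert m S \<subseteq> carrier R" using S m by auto
  have I4: "ideal (Idl (insert m S)) R" using genideal_ideal[OF S'] .
  have "Idl S \<subseteq> Idl (insert m S)" using subset_Idl_subset[OF S'] by auto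
  moreover have "PIdl m \<subseteq> Idl (insert m S)"
    using cgenideal_minimal[OF I4] genideal_self[OF S'] by auto
  ultimately show "Idl S <+>\<^bsub>R\<^esub> PIdl m \<subseteq> Idl (insert m S)" by (rule set_add_least[OF I4])
qed

lemma prod_PIdl:
  assumes I: "ideal I R" and m: "m \<in> carrier R" and z: "z \<in> I \<cdot> (PIdl m)"
  shows "\<exists>q\<in>I. z = q \<otimes> m"
  using z
proof (induct z rule: ideal_prod.induct)
  case (prod i j)
  then obtain c where c: "c \<in> carrier R" "j = c \<otimes> m" unfolding cgenideal_def by auto
  have "i \<in> carrier R" using ideal_closed_ops(6)[OF I prod(1)] .
  then have "i \<otimes> j = (i \<otimes> c) \<otimes> m" using c m by (simp add: m_assoc)
  moreover have "i \<otimes> c \<in> I" using ideal_closed_ops(4)[OF I prod(1) c(1)] .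
  ultimately show ?case by auto
next
  case (sum s1 s2)
  then obtain q1 q2 where q: "q1 \<in> I" "q2 \<in> I" "s1 = q1 \<otimes> m" "s2 = q2 \<otimes> m" by auto
  have "q1 \<in> carrier R" "q2 \<in> carrier R" using q ideal_closed_ops(6)[OF I] by auto
  then have "s1 \<oplus> s2 = (q1 \<oplus> q2) \<otimes> m" using q m by (simp add: l_distr)
  moreover have "q1 \<oplus> q2 \<in> I" using ideal_closed_ops(1)[OF I q(1,2)] .
  ultimately show ?case by auto
qed

lemma prod_mono2:
  assumes "J \<subseteq> J'" "z \<in> I \<cdot> J" shows "z \<in> I \<cdot> J'"
  using assms(2)
proof (induct z rule: ideal_prod.induct)
  case (prod i j) then have "j \<in> J'" using assms(1) by auto
  then show ?case by (rule ideal_prod.prod[OF prod(1)])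
next
  case (sum s1 s2) then show ?case using ideal_prod.sum[of s1 R I J' s2] by simp
qed

lemma uniformize:
  assumes P: "primeideal P R" and X: "ideal X R" and L: "set L \<subseteq> carrier R"
    and H: "\<forall>a\<in>Idl (set L). \<exists>s\<in>carrier R - P. s \<otimes> a \<in> X"
  shows "\<exists>s\<in>carrier R - P. \<forall>a\<in>Idl (set L). s \<otimes> a \<in> X"
proof -
  have gen: "\<forall>g\<in>set L. \<exists>s\<in>carrier R - P. s \<otimes> g \<in> X"
  proof
    fix g assume "g \<in> set L"
    then have "g \<in> Idl (set L)" using genideal_self[OF L] by (rule subsetD[rotated])
    then show "\<exists>s\<in>carrier R - P. s \<otimes> g \<in> X" using H by (rule bspec[rotated])
  qed
  have "set L' \<subseteq> carrier R \<Longrightarrow> \<forall>g\<in>set L'. \<exists>s\<in>carrier R - P. s \<otimes> g \<in> X \<Longrightarrow>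
        \<exists>s\<in>carrier R - P. \<forall>g\<in>set L'. s \<otimes> g \<in> X" for L'
  proof (induct L')
    case Nil then show ?case using one_nP[OF P] by auto
  next
    case (Cons g L')
    then obtain s where s: "s \<in> carrier R - P" "\<forall>g\<in>set L'. s \<otimes> g \<in> X" by auto
    from Cons obtain t where t: "t \<in> carrier R - P" "t \<otimes> g \<in> X" by auto
    have "\<forall>h\<in>set (g # L'). (t \<otimes> s) \<otimes> h \<in> X"
    proof
      fix h assume h: "h \<in> set (g # L')"
      then have hc: "h \<in> carrier R" using Cons by auto
      show "(t \<otimes> s) \<otimes> h \<in> X"
      proof (cases "h = g")
        case True
        then have "(t \<otimes> s) \<otimes> h = s \<otimes> (t \<otimes> g)" using s t hc by (simp add: m_ac)
        then show ?thesis using ideal_closed_ops(3)[OF X t(2)] s by simp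
      next
        case False
        then have "s \<otimes> h \<in> X" using h s by auto
        moreover have "(t \<otimes> s) \<otimes> h = t \<otimes> (s \<otimes> h)" using s t hc by (simp add: m_assoc)
        ultimately show ?thesis using ideal_closed_ops(3)[OF X] t by simp
      qed
    qed
    then show ?case using nP_mult[OF P t(1) s(1)] by (rule bexI)
  qed
  note aux = this[OF L gen]
  then obtain s where s: "s \<in> carrier R - P" "\<forall>g\<in>set L. s \<otimes> g \<in> X" by (elim bexE) simp
  have "set L \<subseteq> colon X s"
  proof
    fix x assume x: "x \<in> set L"
    then have "x \<in> carrier R" "s \<otimes> x \<in> X" using s L by auto
    then show "x \<in> colon X s" unfolding colon_def using s by (simp add: m_comm)
  qed
  then have "Idl (set L) \<subseteq> colon X s" using genideal_minimal[OF colon_ideal[OF X]] s by simp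
  then have "\<forall>a\<in>Idl (set L). s \<otimes> a \<in> X" unfolding colon_def using s(1) by (auto simp: m_comm)
  then show ?thesis using s(1) by (rule bexI)
qed

lemma fin_gen: assumes "ideal M R" shows "\<exists>L. set L \<subseteq> carrier R \<and> M = Idl (set L)"
proof -
  obtain A where "A \<subseteq> carrier R" "finite A" "M = Idl A" using finetely_gen[OF assms] by blast
  moreover obtain L where "set L = A" using finite_list[OF \<open>finite A\<close>] by blast
  ultimately show ?thesis by blast
qed


lemma nak_list:
  assumes P: "primeideal P R" and Ip: "ideal Ip R" and IpP: "Ip \<subseteq> P"
  shows "set L \<subseteq> carrier R \<Longrightarrow> ideal W R \<Longrightarrow>
    \<exists>s\<in>carrier R - P. \<forall>a\<in>Idl (set L). s \<otimes> a \<in> W <+>\<^bsub>R\<^esub> (Ip \<cdot> (Idl (set L))) \<Longrightarrow>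
    \<exists>s\<in>carrier R - P. \<forall>a\<in>Idl (set L). s \<otimes> a \<in> W"
proof (induct L arbitrary: W)
  case Nil
  have "\<forall>a\<in>Idl (set []). \<one> \<otimes> a \<in> W" using Idl_empty ideal_closed_ops(5)[OF Nil(2)] by simp
  then show ?case using one_nP[OF P] by (rule bexI)
next
  case (Cons m L0 W)
  have mc: "m \<in> carrier R" and L0c: "set L0 \<subseteq> carrier R" using Cons(2) by auto
  have Wid: "ideal W R" using Cons(3) .
  define M0 where "M0 = Idl (set L0)"
  define PI where "PI = PIdl m"
  have M0id: "ideal M0 R" unfolding M0_def using genideal_ideal[OF L0c] .
  have PIid: "ideal PI R" unfolding PI_def using cgenideal_ideal[OF mc] .
  have Meq: "Idl (set (m # L0)) = M0 <+>\<^bsub>R\<^esub> PI" unfolding M0_def PI_def using Idl_insert[OF L0c mc] by simp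
  define Z where "Z = Ip \<cdot> PI"
  have Zid: "ideal Z R" unfolding Z_def using ideal_prod_is_ideal[OF Ip PIid] .
  have ZPI: "Z \<subseteq> PI" unfolding Z_def using ideal_prod_inter[OF Ip PIid] by auto
  have dist: "Ip \<cdot> (M0 <+>\<^bsub>R\<^esub> PI) = (Ip \<cdot> M0) <+>\<^bsub>R\<^esub> Z"
    unfolding Z_def using ideal_prod_r_distr[OF Ip M0id PIid] .
  have IM0id: "ideal (Ip \<cdot> M0) R" using ideal_prod_is_ideal[OF Ip M0id] .
  have C4: "\<exists>s\<in>carrier R - P. \<forall>a\<in>M0 <+>\<^bsub>R\<^esub> PI. s \<otimes> a \<in> W <+>\<^bsub>R\<^esub> ((Ip \<cdot> M0) <+>\<^bsub>R\<^esub> Z)"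
    using Cons(4) unfolding Meq unfolding dist .
  then obtain s where s: "s \<in> carrier R - P" and sM: "\<forall>a\<in>M0 <+>\<^bsub>R\<^esub> PI. s \<otimes> a \<in> W <+>\<^bsub>R\<^esub> ((Ip \<cdot> M0) <+>\<^bsub>R\<^esub> Z)"
    by (elim bexE) simp
  have sc: "s \<in> carrier R" using s by simp
  define W' where "W' = W <+>\<^bsub>R\<^esub> PI"
  have W'id: "ideal W' R" unfolding W'_def using add_ideals[OF Wid PIid] .
  have i: "\<forall>a\<in>M0. s \<otimes> a \<in> W' <+>\<^bsub>R\<^esub> (Ip \<cdot> M0)"
  proof
    fix a assume a: "a \<in> M0"
    then have "a \<in> M0 <+>\<^bsub>R\<^esub> PI" using set_add_left[OF M0id PIid] by auto
    with sM have "s \<otimes> a \<in> W <+>\<^bsub>R\<^esub> ((Ip \<cdot> M0) <+>\<^bsub>R\<^esub> Z)" by (rule bspec)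
    then obtain w j where w: "w \<in> W" and j: "j \<in> (Ip \<cdot> M0) <+>\<^bsub>R\<^esub> Z" and eqj: "s \<otimes> a = w \<oplus> j"
      by (rule set_add_E)
    from j obtain y z where y: "y \<in> Ip \<cdot> M0" and z: "z \<in> Z" and jyz: "j = y \<oplus> z"
      by (rule set_add_E)
    have eq: "s \<otimes> a = w \<oplus> (y \<oplus> z)" using eqj jyz by simp
    have wc: "w \<in> carrier R" using ideal_closed_ops(6)[OF Wid w] .
    have yc: "y \<in> carrier R" using ideal_closed_ops(6)[OF IM0id y] .
    have zc: "z \<in> carrier R" using ideal_closed_ops(6)[OF Zid z] .
    have "w \<oplus> (y \<oplus> z) = (w \<oplus> z) \<oplus> y" using wc yc zc by (simp add: a_ac)
    then have "s \<otimes> a = (w \<oplus> z) \<oplus> y" using eq by simp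
    moreover have "z \<in> PI" using z ZPI by auto
    then have "w \<oplus> z \<in> W'" unfolding W'_def by (rule set_add_memI[OF w])
    ultimately show "s \<otimes> a \<in> W' <+>\<^bsub>R\<^esub> (Ip \<cdot> M0)" using set_add_memI[of "w \<oplus> z" W' y "Ip \<cdot> M0"] y by simp
  qed
  have "\<exists>s\<in>carrier R - P. \<forall>a\<in>Idl (set L0). s \<otimes> a \<in> W' <+>\<^bsub>R\<^esub> (Ip \<cdot> (Idl (set L0)))"
    using s i unfolding M0_def by (rule bexI[rotated])
  then have "\<exists>s\<in>carrier R - P. \<forall>a\<in>Idl (set L0). s \<otimes> a \<in> W'" by (rule Cons(1)[OF L0c W'id])
  then obtain s1 where s1: "s1 \<in> carrier R - P" and s1M0: "\<forall>a\<in>M0. s1 \<otimes> a \<in> W'"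
    unfolding M0_def by (elim bexE) simp
  have s1c: "s1 \<in> carrier R" using s1 by simp
  have WZid: "ideal (W <+>\<^bsub>R\<^esub> Z) R" using add_ideals[OF Wid Zid] .
  have iii: "s1 \<otimes> y \<in> W <+>\<^bsub>R\<^esub> Z" if y: "y \<in> Ip \<cdot> M0" for y
    using y
  proof (induct y rule: ideal_prod.induct)
    case (prod i k)
    have ic: "i \<in> carrier R" using ideal_closed_ops(6)[OF Ip prod(1)] .
    have kc: "k \<in> carrier R" using ideal_closed_ops(6)[OF M0id prod(2)] .
    have "s1 \<otimes> k \<in> W'" using s1M0 prod(2) by auto
    then obtain w c where w: "w \<in> W" and c: "c \<in> PI" and eq: "s1 \<otimes> k = w \<oplus> c"
      unfolding W'_def by (rule set_add_E)
    have wc: "w \<in> carrier R" using ideal_closed_ops(6)[OF Wid w] .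
    have cc: "c \<in> carrier R" using ideal_closed_ops(6)[OF PIid c] .
    have "s1 \<otimes> (i \<otimes> k) = i \<otimes> (s1 \<otimes> k)" using ic kc s1c by (simp add: m_lcomm)
    also have "\<dots> = i \<otimes> w \<oplus> i \<otimes> c" using eq ic wc cc by (simp add: r_distr)
    finally have "s1 \<otimes> (i \<otimes> k) = i \<otimes> w \<oplus> i \<otimes> c" .
    moreover have "i \<otimes> w \<in> W" using ideal_closed_ops(3)[OF Wid w ic] .
    moreover have "i \<otimes> c \<in> Z" unfolding Z_def using ideal_prod.prod[OF prod(1) c] .
    ultimately show ?case using set_add_memI[of "i \<otimes> w" W "i \<otimes> c" Z] by simp
  next
    case (sum y1 y2)
    have "y1 \<in> carrier R" "y2 \<in> carrier R" using ideal_closed_ops(6)[OF IM0id sum(1)] ideal_closed_ops(6)[OF IM0id sum(3)] by simp_all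
    then have "s1 \<otimes> (y1 \<oplus> y2) = s1 \<otimes> y1 \<oplus> s1 \<otimes> y2" using s1c by (simp add: r_distr)
    then show ?case using ideal_closed_ops(1)[OF WZid sum(2) sum(4)] by simp
  qed
  have mM: "m \<in> M0 <+>\<^bsub>R\<^esub> PI" using set_add_right[OF M0id PIid] cgenideal_self[OF mc] unfolding PI_def by auto
  with sM have "s \<otimes> m \<in> W <+>\<^bsub>R\<^esub> ((Ip \<cdot> M0) <+>\<^bsub>R\<^esub> Z)" by (rule bspec)
  then obtain w0 j where w0: "w0 \<in> W" and j: "j \<in> (Ip \<cdot> M0) <+>\<^bsub>R\<^esub> Z" and eqj: "s \<otimes> m = w0 \<oplus> j"
    by (rule set_add_E)
  from j obtain y z where y: "y \<in> Ip \<cdot> M0" and z: "z \<in> Z" and jyz: "j = y \<oplus> z"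
    by (rule set_add_E)
  have eq0: "s \<otimes> m = w0 \<oplus> (y \<oplus> z)" using eqj jyz by simp
  have "\<exists>q\<in>Ip. z = q \<otimes> m" using prod_PIdl[OF Ip mc] z unfolding Z_def PI_def by simp
  then obtain q where q: "q \<in> Ip" and zq: "z = q \<otimes> m" by (elim bexE)
  have "s1 \<otimes> y \<in> W <+>\<^bsub>R\<^esub> Z" using iii[OF y] .
  then obtain w1 z1 where w1: "w1 \<in> W" and z1: "z1 \<in> Z" and eq1: "s1 \<otimes> y = w1 \<oplus> z1"
    by (rule set_add_E)
  have "\<exists>q\<in>Ip. z1 = q \<otimes> m" using prod_PIdl[OF Ip mc] z1 unfolding Z_def PI_def by simp
  then obtain q1 where q1: "q1 \<in> Ip" and zq1: "z1 = q1 \<otimes> m" by (elim bexE)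
  have w0c: "w0 \<in> carrier R" using ideal_closed_ops(6)[OF Wid w0] .
  have w1c: "w1 \<in> carrier R" using ideal_closed_ops(6)[OF Wid w1] .
  have yc: "y \<in> carrier R" using ideal_closed_ops(6)[OF IM0id y] .
  have qc: "q \<in> carrier R" using ideal_closed_ops(6)[OF Ip q] .
  have q1c: "q1 \<in> carrier R" using ideal_closed_ops(6)[OF Ip q1] .
  define w2 where "w2 = s1 \<otimes> w0 \<oplus> w1"
  define q2 where "q2 = q1 \<oplus> s1 \<otimes> q"
  have w2W: "w2 \<in> W" unfolding w2_def using ideal_closed_ops(1)[OF Wid ideal_closed_ops(3)[OF Wid w0 s1c] w1] .
  have q2I: "q2 \<in> Ip" unfolding q2_def using ideal_closed_ops(1)[OF Ip q1 ideal_closed_ops(3)[OF Ip q s1c]] .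
  have w2c: "w2 \<in> carrier R" using ideal_closed_ops(6)[OF Wid w2W] .
  have q2c: "q2 \<in> carrier R" using ideal_closed_ops(6)[OF Ip q2I] .
  have eq2: "(s1 \<otimes> s) \<otimes> m = w2 \<oplus> q2 \<otimes> m"
  proof -
    have "(s1 \<otimes> s) \<otimes> m = s1 \<otimes> (s \<otimes> m)" using s1c sc mc by (simp add: m_assoc)
    also have "\<dots> = s1 \<otimes> w0 \<oplus> (s1 \<otimes> y \<oplus> s1 \<otimes> (q \<otimes> m))" using eq0 zq s1c w0c yc qc mc by (simp add: r_distr)
    also have "\<dots> = s1 \<otimes> w0 \<oplus> (w1 \<oplus> q1 \<otimes> m \<oplus> (s1 \<otimes> q) \<otimes> m)" using eq1 zq1 s1c qc mc by (simp add: m_assoc)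
    also have "\<dots> = w2 \<oplus> q2 \<otimes> m" unfolding w2_def q2_def using s1c w0c w1c q1c qc mc by (simp add: l_distr a_ac)
    finally show ?thesis .
  qed
  define \<sigma> where "\<sigma> = s1 \<otimes> s \<oplus> \<ominus> q2"
  have \<sigma>c: "\<sigma> \<in> carrier R" unfolding \<sigma>_def using s1c sc q2c by simp
  have \<sigma>m: "\<sigma> \<otimes> m = w2"
  proof -
    have "\<sigma> \<otimes> m = (s1 \<otimes> s) \<otimes> m \<oplus> \<ominus> (q2 \<otimes> m)" unfolding \<sigma>_def using s1c sc q2c mc by (simp add: l_distr l_minus)
    also have "\<dots> = w2 \<oplus> (q2 \<otimes> m \<oplus> \<ominus> (q2 \<otimes> m))" unfolding eq2 using w2c q2c mc by (simp add: a_assoc)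
    also have "\<dots> = w2" using w2c q2c mc by (simp add: r_neg)
    finally show ?thesis .
  qed
  have \<sigma>P: "\<sigma> \<in> carrier R - P"
  proof -
    have "\<sigma> \<notin> P"
    proof
      assume "\<sigma> \<in> P"
      moreover have "q2 \<in> P" using q2I IpP by auto
      ultimately have "\<sigma> \<oplus> q2 \<in> P" using ideal_closed_ops(1)[OF primeideal.axioms(1)[OF P]] by simp
      moreover have "\<sigma> \<oplus> q2 = s1 \<otimes> s" unfolding \<sigma>_def using s1c sc q2c by (simp add: a_assoc l_neg)
      ultimately have "s1 \<otimes> s \<in> P" by simp
      then show False using nP_mult[OF P s1 s] by simp
    qed
    then show ?thesis using \<sigma>c by simp
  qed
  have final: "\<forall>a\<in>M0 <+>\<^bsub>R\<^esub> PI. (\<sigma> \<otimes> s1) \<otimes> a \<in> W"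
  proof
    fix a assume "a \<in> M0 <+>\<^bsub>R\<^esub> PI"
    then obtain k c where k: "k \<in> M0" and c: "c \<in> PI" and ea: "a = k \<oplus> c" by (rule set_add_E)
    obtain d where d: "d \<in> carrier R" and cd: "c = d \<otimes> m" using c unfolding PI_def cgenideal_def by blast
    have kc: "k \<in> carrier R" using ideal_closed_ops(6)[OF M0id k] .
    have "s1 \<otimes> k \<in> W'" using s1M0 k by auto
    then obtain w3 c3 where w3: "w3 \<in> W" and c3: "c3 \<in> PI" and e3: "s1 \<otimes> k = w3 \<oplus> c3"
      unfolding W'_def by (rule set_add_E)
    obtain e where e: "e \<in> carrier R" and ce: "c3 = e \<otimes> m" using c3 unfolding PI_def cgenideal_def by blast
    have w3c: "w3 \<in> carrier R" using ideal_closed_ops(6)[OF Wid w3] .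
    have "(\<sigma> \<otimes> s1) \<otimes> a = \<sigma> \<otimes> (s1 \<otimes> k) \<oplus> (s1 \<otimes> d) \<otimes> (\<sigma> \<otimes> m)"
      unfolding ea cd using \<sigma>c s1c kc d mc by (simp add: r_distr m_ac)
    also have "\<dots> = \<sigma> \<otimes> w3 \<oplus> e \<otimes> (\<sigma> \<otimes> m) \<oplus> (s1 \<otimes> d) \<otimes> (\<sigma> \<otimes> m)"
      unfolding e3 ce using \<sigma>c w3c e mc by (simp add: r_distr m_ac)
    also have "\<dots> = \<sigma> \<otimes> w3 \<oplus> e \<otimes> w2 \<oplus> (s1 \<otimes> d) \<otimes> w2" unfolding \<sigma>m ..
    finally have ea2: "(\<sigma> \<otimes> s1) \<otimes> a = \<sigma> \<otimes> w3 \<oplus> e \<otimes> w2 \<oplus> (s1 \<otimes> d) \<otimes> w2" .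
    have "\<sigma> \<otimes> w3 \<in> W" using ideal_closed_ops(3)[OF Wid w3 \<sigma>c] .
    moreover have "e \<otimes> w2 \<in> W" using ideal_closed_ops(3)[OF Wid w2W e] .
    moreover have "(s1 \<otimes> d) \<otimes> w2 \<in> W" using ideal_closed_ops(3)[OF Wid w2W] s1c d by simp
    ultimately show "(\<sigma> \<otimes> s1) \<otimes> a \<in> W" unfolding ea2 using ideal_closed_ops(1)[OF Wid] by simp
  qed
  have "\<sigma> \<otimes> s1 \<in> carrier R - P" using nP_mult[OF P \<sigma>P s1] .
  then show ?case using final unfolding Meq by (rule bexI[rotated])
qed

lemma nakayama:
  assumes P: "primeideal P R" and Ip: "ideal Ip R" and IpP: "Ip \<subseteq> P" and W: "ideal W R" and M: "ideal M R"
    and H: "\<forall>a\<in>M. \<exists>s\<in>carrier R - P. s \<otimes> a \<in> W <+>\<^bsub>R\<^esub> (Ip \<cdot> M)"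
  shows "\<forall>a\<in>M. \<exists>s\<in>carrier R - P. s \<otimes> a \<in> W"
proof -
  obtain L where L: "set L \<subseteq> carrier R" and Mgen: "M = Idl (set L)" using fin_gen[OF M] by blast
  have X: "ideal (W <+>\<^bsub>R\<^esub> (Ip \<cdot> M)) R" using add_ideals[OF W ideal_prod_is_ideal[OF Ip M]] .
  have "\<exists>s\<in>carrier R - P. \<forall>a\<in>Idl (set L). s \<otimes> a \<in> W <+>\<^bsub>R\<^esub> (Ip \<cdot> M)"
    using uniformize[OF P X L] H unfolding Mgen by simp
  then have "\<exists>s\<in>carrier R - P. \<forall>a\<in>Idl (set L). s \<otimes> a \<in> W" using nak_list[OF P Ip IpP L W] unfolding Mgen by simp
  then show ?thesis unfolding Mgen by auto
qed

end


context cnr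
begin

primrec qp :: "'a set \<Rightarrow> 'a set \<Rightarrow> nat \<Rightarrow> 'a set" where
  "qp w p 0 = carrier R"
| "qp w p (Suc n) = w <+>\<^bsub>R\<^esub> (p \<cdot> (qp w p n))"

lemma qp_props:
  assumes w: "ideal w R" and p: "ideal p R"
  shows "ideal (qp w p n) R \<and> w \<subseteq> qp w p n \<and> qp w p (Suc n) \<subseteq> qp w p n"
proof (induct n)
  case 0
  have "ideal (qp w p (Suc 0)) R" using add_ideals[OF w ideal_prod_is_ideal[OF p oneideal]] by simp
  then show ?case using oneideal ideal_closed_ops(6)[OF w] ideal_closed_ops(6)[OF \<open>ideal (qp w p (Suc 0)) R\<close>]
    by auto
next
  case (Suc n)
  then have I: "ideal (qp w p n) R" and sub: "qp w p (Suc n) \<subseteq> qp w p n" by auto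
  have I1: "ideal (qp w p (Suc n)) R" using add_ideals[OF w ideal_prod_is_ideal[OF p I]] by simp
  have "w \<subseteq> qp w p (Suc n)" using set_add_left[OF w ideal_prod_is_ideal[OF p I]] by simp
  moreover have "p \<cdot> (qp w p (Suc n)) \<subseteq> p \<cdot> (qp w p n)"
  proof
    fix z assume "z \<in> p \<cdot> (qp w p (Suc n))"
    then show "z \<in> p \<cdot> (qp w p n)" by (rule prod_mono2[OF sub])
  qed
  then have "qp w p (Suc (Suc n)) \<subseteq> qp w p (Suc n)" using set_add_mono'[of w w] by simp
  ultimately show ?case using I1 by simp
qed

lemma pow_notin:
  assumes w: "primeideal w R" and a: "a \<in> carrier R" "a \<notin> w"
  shows "a [^] (n::nat) \<notin> w"
proof (induct n)
  case 0 then show ?case using one_nP[OF w] by simp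
next
  case (Suc n)
  show ?case
  proof
    assume "a [^] Suc n \<in> w"
    then have "a [^] n \<otimes> a \<in> w" by simp
    then have "a [^] n \<in> w \<or> a \<in> w" using primeideal.I_prime[OF w, of "a [^] n" a] a by simp
    then show False using Suc a by simp
  qed
qed

lemma PIT:
  assumes w: "primeideal w R" and p: "primeideal p R" and u: "primeideal u R"
    and wp: "w \<subseteq> p" "w \<noteq> p" and pu: "p \<subseteq> u" "p \<noteq> u" and x: "x \<in> u"
  shows "\<exists>Q. primeideal Q R \<and> w \<subseteq> Q \<and> x \<in> Q \<and> Q \<subseteq> u \<and> Q \<noteq> u"
proof (rule ccontr)
  assume H: "\<not> ?thesis"
  have Hmin: "Q = u" if "primeideal Q R" "w \<subseteq> Q" "x \<in> Q" "Q \<subseteq> u" for Q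
    using H that by blast
  have wid: "ideal w R" using primeideal.axioms(1)[OF w] .
  have pid: "ideal p R" using primeideal.axioms(1)[OF p] .
  have uid: "ideal u R" using primeideal.axioms(1)[OF u] .
  have xc: "x \<in> carrier R" using Pc[OF u] x by auto
  have xp: "x \<notin> p"
  proof
    assume "x \<in> p" then have "p = u" using Hmin[OF p wp(1) _ pu(1)] by simp
    then show False using pu(2) by simp
  qed
  define J where "J = w <+>\<^bsub>R\<^esub> PIdl x"
  have PXid: "ideal (PIdl x) R" using cgenideal_ideal[OF xc] .
  have Jid: "ideal J R" unfolding J_def using add_ideals[OF wid PXid] .
  have wJ: "w \<subseteq> J" unfolding J_def using set_add_left[OF wid PXid] .
  have xJ: "x \<in> J" unfolding J_def using set_add_right[OF wid PXid] cgenideal_self[OF xc] by auto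
  have minJ: "Q = u" if "primeideal Q R" "J \<subseteq> Q" "Q \<subseteq> u" for Q
    using Hmin[OF that(1) _ _ that(3)] that(2) wJ xJ by auto
  have goodJ: "good u J (carrier R)" using good_carrier[OF u Jid minJ] .
  define sym where "sym n = sat p (qp w p n)" for n
  have qid: "ideal (qp w p n) R" and wq: "w \<subseteq> qp w p n" and qdec: "qp w p (Suc n) \<subseteq> qp w p n" for n
    using qp_props[OF wid pid] by auto
  have symid: "ideal (sym n) R" for n unfolding sym_def using sat_ideal[OF p qid] .
  have wsym: "w \<subseteq> sym n" for n unfolding sym_def using wq sat_incl[OF p qid] by blast
  have symdec: "sym (Suc n) \<subseteq> sym n" for n unfolding sym_def using sat_mono[OF qdec] .
  define I where "I n = sym n <+>\<^bsub>R\<^esub> PIdl x" for n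
  have Iid: "ideal (I n) R" for n unfolding I_def using add_ideals[OF symid PXid] .
  have JI: "J \<subseteq> I n" for n unfolding I_def J_def using set_add_mono'[OF wsym, of "PIdl x" "PIdl x"] by simp
  have Idec: "I (Suc n) \<subseteq> I n" for n unfolding I_def using set_add_mono'[OF symdec, of "PIdl x" "PIdl x"] by simp
  have satc: "sat u (carrier R) = carrier R" using sat_carrier[OF u oneideal] one_nP[OF u] by blast
  have Isat: "I n \<subseteq> sat u (carrier R)" for n using ideal_closed_ops(6)[OF Iid] satc by blast
  have "(\<forall>n. ideal (I n) R \<and> J \<subseteq> I n \<and> I n \<subseteq> sat u (carrier R)) \<and> (\<forall>n. I (Suc n) \<subseteq> I n)"
    using Iid JI Isat Idec by blast
  then obtain n where n: "\<forall>m\<ge>n. I n \<subseteq> sat u (I m)" using goodJ unfolding good_def by blast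
  then have st: "I n \<subseteq> sat u (I (Suc n))" by simp
  have claim1: "\<forall>a\<in>sym n. \<exists>t\<in>carrier R - u. t \<otimes> a \<in> sym (Suc n) <+>\<^bsub>R\<^esub> ((PIdl x) \<cdot> (sym n))"
  proof
    fix a assume a: "a \<in> sym n"
    have ac: "a \<in> carrier R" using ideal_closed_ops(6)[OF symid a] .
    have "a \<in> I n" unfolding I_def using set_add_left[OF symid PXid] a by auto
    then have "a \<in> sat u (I (Suc n))" using st by auto
    then obtain t where t: "t \<in> carrier R - u" and ta: "t \<otimes> a \<in> I (Suc n)" unfolding sat_def by auto
    have tc: "t \<in> carrier R" using t by simp
    from ta obtain b c where b: "b \<in> sym (Suc n)" and c: "c \<in> PIdl x" and tabc: "t \<otimes> a = b \<oplus> c"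
      unfolding I_def by (rule set_add_E)
    obtain r where r: "r \<in> carrier R" and cr: "c = r \<otimes> x" using c unfolding cgenideal_def by auto
    have bc: "b \<in> carrier R" using ideal_closed_ops(6)[OF symid b] .
    have cc: "c \<in> carrier R" using r xc cr by simp
    have "c = t \<otimes> a \<oplus> \<ominus> b"
    proof -
      have "t \<otimes> a \<oplus> \<ominus> b = (c \<oplus> b) \<oplus> \<ominus> b" using tabc bc cc by (simp add: a_comm)
      also have "\<dots> = c" using bc cc by (simp add: a_assoc r_neg)
      finally show ?thesis by simp
    qed
    moreover have "t \<otimes> a \<in> sym n" using ideal_closed_ops(3)[OF symid a tc] .
    moreover have "b \<in> sym n" using symdec b by auto
    ultimately have "c \<in> sym n" using ideal_closed_ops(1)[OF symid _ ideal_closed_ops(2)[OF symid]] by simp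
    then obtain s where s: "s \<in> carrier R - p" and sc: "s \<otimes> c \<in> qp w p n" unfolding sym_def sat_def by auto
    have "(s \<otimes> x) \<otimes> r = s \<otimes> c" using s r xc cr by (simp add: m_ac)
    moreover have "s \<otimes> x \<in> carrier R - p" using nP_mult[OF p s] xc xp by simp
    ultimately have "(s \<otimes> x) \<otimes> r \<in> qp w p n" "s \<otimes> x \<in> carrier R - p" using sc by simp_all
    then have "r \<in> sym n" unfolding sym_def sat_def using r by (intro CollectI conjI bexI)
    then have "x \<otimes> r \<in> (PIdl x) \<cdot> (sym n)" by (rule ideal_prod.prod[where R=R, OF cgenideal_self[OF xc]])
    moreover have "c = x \<otimes> r" using cr r xc by (simp add: m_comm)
    ultimately have "t \<otimes> a \<in> sym (Suc n) <+>\<^bsub>R\<^esub> ((PIdl x) \<cdot> (sym n))"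
      using tabc set_add_memI[OF b, of c "(PIdl x) \<cdot> (sym n)"] by simp
    then show "\<exists>t\<in>carrier R - u. t \<otimes> a \<in> sym (Suc n) <+>\<^bsub>R\<^esub> ((PIdl x) \<cdot> (sym n))"
      using t by (rule bexI)
  qed
  have PXu: "PIdl x \<subseteq> u" using cgenideal_minimal[OF uid x] .
  have nak1: "\<forall>a\<in>sym n. \<exists>t\<in>carrier R - u. t \<otimes> a \<in> sym (Suc n)"
    using nakayama[OF u PXid PXu symid symid claim1] .
  have symeq: "sym n \<subseteq> sym (Suc n)"
  proof
    fix a assume a: "a \<in> sym n"
    then obtain t where t: "t \<in> carrier R - u" and ta: "t \<otimes> a \<in> sym (Suc n)" using nak1 by auto
    have ac: "a \<in> carrier R" using ideal_closed_ops(6)[OF symid a] .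
    have tp: "t \<in> carrier R - p" using t pu(1) by auto
    from ta obtain s where s: "s \<in> carrier R - p" and st: "s \<otimes> (t \<otimes> a) \<in> qp w p (Suc n)"
      unfolding sym_def sat_def by auto
    have "(s \<otimes> t) \<otimes> a \<in> qp w p (Suc n)" using st s t ac by (simp add: m_assoc)
    moreover have "s \<otimes> t \<in> carrier R - p" using nP_mult[OF p s tp] .
    ultimately show "a \<in> sym (Suc n)" unfolding sym_def sat_def using ac by auto
  qed
  have claim2: "\<forall>a\<in>qp w p n. \<exists>s\<in>carrier R - p. s \<otimes> a \<in> w <+>\<^bsub>R\<^esub> (p \<cdot> (qp w p n))"
  proof
    fix a assume a: "a \<in> qp w p n"
    then have "a \<in> sym n" unfolding sym_def using sat_incl[OF p qid] by auto
    then have "a \<in> sym (Suc n)" using symeq by auto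
    then show "\<exists>s\<in>carrier R - p. s \<otimes> a \<in> w <+>\<^bsub>R\<^esub> (p \<cdot> (qp w p n))" unfolding sym_def sat_def by auto
  qed
  have nak2: "\<forall>a\<in>qp w p n. \<exists>s\<in>carrier R - p. s \<otimes> a \<in> w"
    using nakayama[OF p pid _ wid qid claim2] by simp
  obtain a where a: "a \<in> p" "a \<notin> w" using wp by auto
  have ac: "a \<in> carrier R" using Pc[OF p] a by auto
  have apow: "a [^] k \<in> qp w p k" for k :: nat
  proof (induct k)
    case 0 then show ?case by simp
  next
    case (Suc k)
    have "a \<otimes> a [^] k \<in> p \<cdot> (qp w p k)" by (rule ideal_prod.prod[OF a(1) Suc])
    then have "\<zero> \<oplus> a \<otimes> a [^] k \<in> qp w p (Suc k)"
      using set_add_memI[OF ideal_closed_ops(5)[OF wid]] by simp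
    moreover have "\<zero> \<oplus> a \<otimes> a [^] k = a [^] Suc k" using ac by (simp add: m_comm)
    ultimately show ?case by simp
  qed
  obtain s where s: "s \<in> carrier R - p" and sa: "s \<otimes> a [^] n \<in> w" using nak2 apow[of n] by auto
  have "s \<notin> w" using s wp(1) by auto
  moreover have "a [^] n \<notin> w" using pow_notin[OF w ac a(2)] .
  ultimately show False using primeideal.I_prime[OF w, of s "a [^] n"] s sa ac by simp
qed

end


lemma pdim_ge:
  assumes "C \<subseteq> U" "C \<noteq> {}" "finite C" "\<forall>x\<in>C. \<forall>y\<in>C. r x y \<or> r y x"
  shows "enat (card C - 1) \<le> pdim U r"
proof -
  have "C \<in> fin_chains U r" unfolding fin_chains_def using assms by blast
  then show ?thesis unfolding pdim_def by (rule SUP_upper)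
qed

lemma pdim_mono: assumes "U \<subseteq> V" shows "pdim U r \<le> pdim V r"
proof -
  have "fin_chains U r \<subseteq> fin_chains V r" unfolding fin_chains_def using assms by blast
  then show ?thesis unfolding pdim_def by (rule SUP_subset_mono) simp
qed

lemma no4:
  fixes U :: "'x set set"
  assumes d: "pdim U (\<subseteq>) \<le> 2" and ins: "A \<in> U" "B \<in> U" "C \<in> U" "D \<in> U"
    and ch: "A \<subset> B" "B \<subset> C" "C \<subset> D"
  shows False
proof -
  let ?C = "{A, B, C, D}"
  have dist: "A \<noteq> B" "A \<noteq> C" "A \<noteq> D" "B \<noteq> C" "B \<noteq> D" "C \<noteq> D" using ch by auto
  have "card ?C = 4" using dist by simp
  moreover have "enat (card ?C - 1) \<le> pdim U (\<subseteq>)"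
    by (rule pdim_ge) (use ins ch in auto)
  ultimately have "enat 3 \<le> 2" using d by simp
  then show False by (simp add: numeral_eq_enat)
qed

lemma height2:
  fixes U :: "'x set set"
  assumes d: "pdim U (\<subseteq>) \<le> 2" and ins: "A \<in> U" "B \<in> U" "T \<in> U"
    and ch: "A \<subset> B" "B \<subset> T"
  shows "pheight U (\<subseteq>) T = 2"
proof -
  have "pheight U (\<subseteq>) T \<le> pdim U (\<subseteq>)" unfolding pheight_def
    by (rule pdim_mono) (auto simp: downset_def)
  moreover have "enat (card {A, B, T} - 1) \<le> pheight U (\<subseteq>) T" unfolding pheight_def
    by (rule pdim_ge) (use ins ch in \<open>auto simp: downset_def\<close>)
  moreover have "A \<noteq> B" "B \<noteq> T" "A \<noteq> T" using ch by auto
  then have "card {A, B, T} = 3" by simp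
  ultimately show ?thesis using d by (simp add: numeral_eq_enat)
qed

context cnr
begin

definition minpr :: "'a set \<Rightarrow> 'a set set" where
  "minpr I = {P. primeideal P R \<and> I \<subseteq> P \<and> (\<forall>Q. primeideal Q R \<and> I \<subseteq> Q \<and> Q \<subseteq> P \<longrightarrow> Q = P)}"

lemma minpr_finite: assumes I: "ideal I R" shows "finite (minpr I)"
proof (rule ccontr)
  assume inf: "infinite (minpr I)"
  let ?S = "{J. ideal J R \<and> infinite (minpr J)}"
  have "?S \<noteq> {}" using I inf by blast
  then obtain I0 where I0: "I0 \<in> ?S" and I0max: "\<forall>Y\<in>?S. I0 \<subseteq> Y \<longrightarrow> Y = I0"
    using max_ideal_exists[of ?S] by blast
  have I0id: "ideal I0 R" and I0inf: "infinite (minpr I0)" using I0 by auto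
  show False
  proof (cases "I0 = carrier R")
    case True
    have "minpr I0 = {}"
    proof -
      have "P \<notin> minpr I0" for P
      proof
        assume "P \<in> minpr I0"
        then have "primeideal P R" "carrier R \<subseteq> P" using True unfolding minpr_def by auto
        then show False using Pc primeideal.I_notcarr by blast
      qed
      then show ?thesis by blast
    qed
    then show False using I0inf by simp
  next
    case ncar: False
    show False
    proof (cases "primeideal I0 R")
      case True
      have "minpr I0 \<subseteq> {I0}" unfolding minpr_def using True by blast
      then have "finite (minpr I0)" using finite_subset by blast
      then show False using I0inf by simp
    next
      case False
      have "\<not> (\<forall>a\<in>carrier R. \<forall>b\<in>carrier R. a \<otimes> b \<in> I0 \<longrightarrow> a \<in> I0 \<or> b \<in> I0)"
      proof
        assume "\<forall>a\<in>carrier R. \<forall>b\<in>carrier R. a \<otimes> b \<in> I0 \<longrightarrow> a \<in> I0 \<or> b \<in> I0"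
        then have "primeideal I0 R" using primeidealI[OF I0id is_cring] ncar by metis
        then show False using False by simp
      qed
      then obtain a b where a: "a \<in> carrier R" "a \<notin> I0" and b: "b \<in> carrier R" "b \<notin> I0" and ab: "a \<otimes> b \<in> I0"
        by blast
      have ext: "finite (minpr (I0 <+>\<^bsub>R\<^esub> PIdl c))" and sub: "\<And>P. primeideal P R \<Longrightarrow> I0 \<subseteq> P \<Longrightarrow> c \<in> P \<Longrightarrow> P \<in> minpr I0 \<Longrightarrow> P \<in> minpr (I0 <+>\<^bsub>R\<^esub> PIdl c)"
        if c: "c \<in> carrier R" "c \<notin> I0" for c
      proof -
        have Pid: "ideal (PIdl c) R" using cgenideal_ideal[OF c(1)] .
        have Jid: "ideal (I0 <+>\<^bsub>R\<^esub> PIdl c) R" using add_ideals[OF I0id Pid] .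
        have "I0 \<subseteq> I0 <+>\<^bsub>R\<^esub> PIdl c" using set_add_left[OF I0id Pid] .
        moreover have "c \<in> I0 <+>\<^bsub>R\<^esub> PIdl c" using set_add_right[OF I0id Pid] cgenideal_self[OF c(1)] by auto
        ultimately have "I0 <+>\<^bsub>R\<^esub> PIdl c \<noteq> I0" "I0 \<subseteq> I0 <+>\<^bsub>R\<^esub> PIdl c" using c by auto
        then have "I0 <+>\<^bsub>R\<^esub> PIdl c \<notin> ?S" using I0max by blast
        then show "finite (minpr (I0 <+>\<^bsub>R\<^esub> PIdl c))" using Jid by blast
        fix P assume P: "primeideal P R" "I0 \<subseteq> P" "c \<in> P" "P \<in> minpr I0"
        have Pid2: "ideal P R" using primeideal.axioms(1)[OF P(1)] .
        have "PIdl c \<subseteq> P" using cgenideal_minimal[OF Pid2 P(3)] .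
        then have JP: "I0 <+>\<^bsub>R\<^esub> PIdl c \<subseteq> P" using set_add_least[OF Pid2 P(2)] by simp
        have "Q = P" if "primeideal Q R" "I0 <+>\<^bsub>R\<^esub> PIdl c \<subseteq> Q" "Q \<subseteq> P" for Q
        proof -
          have "I0 \<subseteq> Q" using that(2) set_add_left[OF I0id Pid] by blast
          then show ?thesis using P(4) that(1,3) unfolding minpr_def by blast
        qed
        then show "P \<in> minpr (I0 <+>\<^bsub>R\<^esub> PIdl c)" unfolding minpr_def using P(1) JP by blast
      qed
      have "minpr I0 \<subseteq> minpr (I0 <+>\<^bsub>R\<^esub> PIdl a) \<union> minpr (I0 <+>\<^bsub>R\<^esub> PIdl b)"
      proof
        fix P assume P: "P \<in> minpr I0"
        then have Pp: "primeideal P R" and IP: "I0 \<subseteq> P" unfolding minpr_def by auto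
        have "a \<otimes> b \<in> P" using ab IP by auto
        then have "a \<in> P \<or> b \<in> P" using primeideal.I_prime[OF Pp a(1) b(1)] by simp
        then show "P \<in> minpr (I0 <+>\<^bsub>R\<^esub> PIdl a) \<union> minpr (I0 <+>\<^bsub>R\<^esub> PIdl b)"
          using sub[OF a Pp IP _ P] sub[OF b Pp IP _ P] by blast
      qed
      then have "finite (minpr I0)" using ext[OF a] ext[OF b] finite_subset by blast
      then show False using I0inf by simp
    qed
  qed
qed

lemma prod_elem:
  assumes P: "primeideal P R" and I: "ideal I R" and IP: "\<not> I \<subseteq> P"
  shows "finite G \<Longrightarrow> \<forall>Q\<in>G. primeideal Q R \<and> \<not> Q \<subseteq> P \<Longrightarrow> \<exists>c\<in>I. c \<notin> P \<and> (\<forall>Q\<in>G. c \<in> Q)"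
proof (induct G rule: finite_induct)
  case empty then show ?case using IP by blast
next
  case (insert Q G)
  then obtain c0 where c0: "c0 \<in> I" "c0 \<notin> P" "\<forall>Q'\<in>G. c0 \<in> Q'" by blast
  from insert(4) obtain d where d: "d \<in> Q" "d \<notin> P" and Qp: "primeideal Q R" by blast
  have Qid: "ideal Q R" using primeideal.axioms(1)[OF Qp] .
  have dc: "d \<in> carrier R" using ideal_closed_ops(6)[OF Qid d(1)] .
  have c0c: "c0 \<in> carrier R" using ideal_closed_ops(6)[OF I c0(1)] .
  have "d \<otimes> c0 \<in> I" using ideal_closed_ops(3)[OF I c0(1) dc] .
  moreover have "d \<otimes> c0 \<notin> P" using primeideal.I_prime[OF P dc c0c] d c0 by blast
  moreover have "d \<otimes> c0 \<in> Q" using ideal_closed_ops(4)[OF Qid d(1) c0c] .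
  moreover have "\<forall>Q'\<in>G. d \<otimes> c0 \<in> Q'"
  proof
    fix Q' assume "Q' \<in> G"
    then have "c0 \<in> Q'" "ideal Q' R" using c0 insert(4) primeideal.axioms(1) by auto
    then show "d \<otimes> c0 \<in> Q'" using ideal_closed_ops(3) dc by blast
  qed
  ultimately show ?case by blast
qed

lemma avoidance:
  assumes I: "ideal I R"
  shows "finite F \<Longrightarrow> \<forall>Q\<in>F. primeideal Q R \<and> \<not> I \<subseteq> Q \<Longrightarrow> \<exists>a\<in>I. \<forall>Q\<in>F. a \<notin> Q"
proof (induct "card F" arbitrary: F rule: less_induct)
  case less
  show ?case
  proof (cases "F = {}")
    case True then show ?thesis using ideal_closed_ops(5)[OF I] by blast
  next
    case False
    then obtain P where PF: "P \<in> F" by blast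
    let ?F' = "F - {P}"
    have Pp: "primeideal P R" and IP: "\<not> I \<subseteq> P" using less(3) PF by auto
    have "card ?F' < card F" using card_Diff1_less[OF less(2) PF] .
    then obtain b where b: "b \<in> I" "\<forall>Q\<in>?F'. b \<notin> Q" using less(1)[of ?F'] less(2,3) by blast
    show ?thesis
    proof (cases "b \<in> P")
      case False then show ?thesis using b by blast
    next
      case bP: True
      show ?thesis
      proof (cases "\<exists>Q\<in>?F'. Q \<subseteq> P")
        case True
        then obtain Q where Q: "Q \<in> ?F'" "Q \<subseteq> P" by blast
        have QF: "Q \<in> F" using Q by simp
        have "card (F - {Q}) < card F" using card_Diff1_less[OF less(2) QF] .
        then obtain c where c: "c \<in> I" "\<forall>Q'\<in>F - {Q}. c \<notin> Q'" using less(1)[of "F - {Q}"] less(2,3) by blast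
        have "c \<notin> P" using c PF Q by auto
        then have "c \<notin> Q" using Q by auto
        then show ?thesis using c by blast
      next
        case False
        have "\<forall>Q\<in>?F'. primeideal Q R \<and> \<not> Q \<subseteq> P" using False less(3) by blast
        then obtain c where c: "c \<in> I" "c \<notin> P" "\<forall>Q\<in>?F'. c \<in> Q"
          using prod_elem[OF Pp I IP] less(2) by blast
        have bc: "b \<in> carrier R" "c \<in> carrier R" using ideal_closed_ops(6)[OF I] b c by auto
        have aI: "b \<oplus> c \<in> I" using ideal_closed_ops(1)[OF I b(1) c(1)] .
        have "b \<oplus> c \<notin> Q" if Q: "Q \<in> F" for Q
        proof
          assume a: "b \<oplus> c \<in> Q"
          have Qid: "ideal Q R" using less(3) Q primeideal.axioms(1) by blast
          show False
          proof (cases "Q = P")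
            case True
            have "(b \<oplus> c) \<oplus> \<ominus> b = c \<oplus> (b \<oplus> \<ominus> b)" using bc by (simp add: a_ac)
            then have "c = (b \<oplus> c) \<oplus> \<ominus> b" using bc by (simp add: r_neg)
            moreover have "b \<in> Q" using bP True by simp
            ultimately have "c \<in> Q" using ideal_closed_ops(1)[OF Qid a ideal_closed_ops(2)[OF Qid]] by metis
            then show False using c True by simp
          next
            case False
            then have cQ: "c \<in> Q" and nb: "b \<notin> Q" using c b Q by auto
            have "b = (b \<oplus> c) \<oplus> \<ominus> c" using bc by (simp add: a_assoc r_neg)
            then have "b \<in> Q" using ideal_closed_ops(1)[OF Qid a ideal_closed_ops(2)[OF Qid cQ]] by simp
            then show False using nb by simp
          qed
        qed
        then show ?thesis using aI by blast
      qed
    qed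
  qed
qed

end


context cnr
begin

lemma memSpec: "P \<in> Spec R \<longleftrightarrow> primeideal P R"
  unfolding Spec_def by simp

lemma mub_sub:
  assumes u: "primeideal u R" and v: "primeideal v R"
  shows "mub (Spec R) (\<subseteq>) {u, v} \<subseteq> minpr (u <+>\<^bsub>R\<^esub> v)"
proof
  fix W assume W: "W \<in> mub (Spec R) (\<subseteq>) {u, v}"
  have uid: "ideal u R" using primeideal.axioms(1)[OF u] .
  have vid: "ideal v R" using primeideal.axioms(1)[OF v] .
  from W have W1: "W \<in> {w \<in> Spec R. \<forall>a\<in>{u, v}. a \<subseteq> w}"
    and Wmin: "\<forall>Y\<in>{w \<in> Spec R. \<forall>a\<in>{u, v}. a \<subseteq> w}. Y \<subseteq> W \<longrightarrow> Y = W"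
    unfolding mub_def minset_def by simp_all
  from W1 have Wp: "primeideal W R" and uW: "u \<subseteq> W" and vW: "v \<subseteq> W" unfolding memSpec by simp_all
  have Wid: "ideal W R" using primeideal.axioms(1)[OF Wp] .
  have "u <+>\<^bsub>R\<^esub> v \<subseteq> W" using set_add_least[OF Wid uW vW] .
  moreover have "Q = W" if Q: "primeideal Q R" "u <+>\<^bsub>R\<^esub> v \<subseteq> Q" "Q \<subseteq> W" for Q
  proof -
    have "u \<subseteq> Q" "v \<subseteq> Q" using Q(2) set_add_left[OF uid vid] set_add_right[OF uid vid] by auto
    then have "Q \<in> {w \<in> Spec R. \<forall>a\<in>{u, v}. a \<subseteq> w}" using Q(1) unfolding memSpec by simp
    then show ?thesis using Wmin Q(3) by simp
  qed
  ultimately show "W \<in> minpr (u <+>\<^bsub>R\<^esub> v)" unfolding minpr_def using Wp by simp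
qed

lemma mub_finite:
  assumes u: "primeideal u R" and v: "primeideal v R"
  shows "finite (mub (Spec R) (\<subseteq>) {u, v})"
proof -
  have "ideal (u <+>\<^bsub>R\<^esub> v) R" using add_ideals[OF primeideal.axioms(1)[OF u] primeideal.axioms(1)[OF v]] .
  then have "finite (minpr (u <+>\<^bsub>R\<^esub> v))" by (rule minpr_finite)
  then show ?thesis using mub_sub[OF u v] by (rule finite_subset[rotated])
qed

lemma minset_finite: "finite (minset (Spec R) (\<subseteq>))"
proof -
  have "minset (Spec R) (\<subseteq>) \<subseteq> minpr {\<zero>}"
  proof
    fix u assume "u \<in> minset (Spec R) (\<subseteq>)"
    then have up: "primeideal u R" and umin: "\<forall>v. primeideal v R \<longrightarrow> v \<subseteq> u \<longrightarrow> v = u"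
      unfolding minset_def Spec_def by simp_all
    have "{\<zero>} \<subseteq> u" using ideal_closed_ops(5)[OF primeideal.axioms(1)[OF up]] by simp
    then show "u \<in> minpr {\<zero>}" unfolding minpr_def using up umin by simp
  qed
  then show ?thesis using minpr_finite[OF zeroideal] by (rule finite_subset)
qed

lemma main:
  assumes dim: "pdim (Spec R) (\<subseteq>) = 2" and fin: "finite {P \<in> Spec R. pheight (Spec R) (\<subseteq>) P = 2}"
  shows "K_poset (Spec R) (\<subseteq>)"
proof -
  let ?U = "Spec R"
  have d2: "pdim ?U (\<subseteq>) \<le> 2" using dim by simp
  have H2: "Hlevel ?U (\<subseteq>) 2 = {P \<in> Spec R. pheight (Spec R) (\<subseteq>) P = 2}"
    unfolding Hlevel_def by (simp add: numeral_eq_enat)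
  have finH: "finite (Hlevel ?U (\<subseteq>) 2)" using fin H2 by simp
  have mubs: "\<forall>u\<in>minset ?U (\<subseteq>). \<forall>v\<in>minset ?U (\<subseteq>). u \<noteq> v \<longrightarrow> finite (mub ?U (\<subseteq>) {u, v})"
    using mub_finite unfolding minset_def memSpec by auto
  have cond3: "infinite (between ?U (\<subseteq>) u w)"
    if u: "u \<in> ?U" and w: "w \<in> ?U" and v: "v \<in> ?U" "v \<subseteq> u" "v \<noteq> u" "w \<subseteq> v" "w \<noteq> v" for u w v
  proof
    assume finB: "finite (between ?U (\<subseteq>) u w)"
    let ?B = "between ?U (\<subseteq>) u w"
    have up: "primeideal u R" and wpr: "primeideal w R" and vp: "primeideal v R" using u w v memSpec by auto
    have umax: "T = u" if "T \<in> ?U" "u \<subseteq> T" for T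
    proof (rule ccontr)
      assume "T \<noteq> u"
      show False by (rule no4[OF d2 w v(1) u that(1)]) (use v that \<open>T \<noteq> u\<close> in auto)
    qed
    have wmin: "T = w" if "T \<in> ?U" "T \<subseteq> w" for T
    proof (rule ccontr)
      assume "T \<noteq> w"
      show False by (rule no4[OF d2 that(1) w v(1) u]) (use v that \<open>T \<noteq> w\<close> in auto)
    qed
    have wminset: "w \<in> minset ?U (\<subseteq>)" unfolding minset_def using w wmin by simp
    define Ms where "Ms = (\<Union>w'\<in>minset ?U (\<subseteq>) - {w}. mub ?U (\<subseteq>) {w, w'})"
    have finMs: "finite Ms" unfolding Ms_def
    proof (rule finite_UN_I)
      show "finite (minset ?U (\<subseteq>) - {w})" using minset_finite by simp
      fix w' assume "w' \<in> minset ?U (\<subseteq>) - {w}"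
      then have "w' \<in> minset ?U (\<subseteq>)" "w \<noteq> w'" by auto
      then show "finite (mub ?U (\<subseteq>) {w, w'})" using mubs wminset by simp
    qed
    define F where "F = insert w (?B \<union> (Hlevel ?U (\<subseteq>) 2 - {u}) \<union> (Ms - {u}))"
    have finF: "finite F" unfolding F_def using finB finH finMs by simp
    have BU: "?B \<subseteq> ?U" unfolding between_def by auto
    have HU: "Hlevel ?U (\<subseteq>) 2 \<subseteq> ?U" unfolding Hlevel_def by auto
    have MU: "Ms \<subseteq> ?U" unfolding Ms_def mub_def minset_def by auto
    have Bnu: "u \<notin> ?B" unfolding between_def upset_def by auto
    have FU: "F \<subseteq> ?U" "u \<notin> F"
    proof -
      show "F \<subseteq> ?U" unfolding F_def using w BU HU MU by auto
      have "w \<noteq> u" using v by auto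
      then show "u \<notin> F" unfolding F_def using Bnu by auto
    qed
    have Fprop: "\<forall>Q\<in>F. primeideal Q R \<and> \<not> u \<subseteq> Q"
    proof
      fix Q assume Q: "Q \<in> F"
      then have "Q \<in> ?U" "Q \<noteq> u" using FU by auto
      then show "primeideal Q R \<and> \<not> u \<subseteq> Q" using umax[of Q] unfolding memSpec by auto
    qed
    have "\<exists>a\<in>u. \<forall>Q\<in>F. a \<notin> Q" using avoidance[OF primeideal.axioms(1)[OF up] finF Fprop] .
    then obtain x where x: "x \<in> u" and xF: "\<forall>Q\<in>F. x \<notin> Q" by (elim bexE)
    have "\<exists>Q. primeideal Q R \<and> w \<subseteq> Q \<and> x \<in> Q \<and> Q \<subseteq> u \<and> Q \<noteq> u" using PIT[OF wpr vp up v(4,5) v(2,3) x] .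
    then obtain Q where Qp: "primeideal Q R" and wQ: "w \<subseteq> Q" and xQ: "x \<in> Q" and Qu: "Q \<subseteq> u" "Q \<noteq> u"
      by (elim exE conjE)
    have QU: "Q \<in> ?U" using Qp memSpec by simp
    have xw: "x \<notin> w" using xF F_def by auto
    have Qw: "Q \<noteq> w" using xQ xw by auto
    have ups: "upset ?U (\<subseteq>) Q - {Q} = {u}"
    proof
      show "{u} \<subseteq> upset ?U (\<subseteq>) Q - {Q}" unfolding upset_def using u Qu by auto
      show "upset ?U (\<subseteq>) Q - {Q} \<subseteq> {u}"
      proof
        fix T assume "T \<in> upset ?U (\<subseteq>) Q - {Q}"
        then have T: "T \<in> ?U" "Q \<subseteq> T" "T \<noteq> Q" unfolding upset_def by auto
        have "pheight ?U (\<subseteq>) T = 2" by (rule height2[OF d2 w QU T(1)]) (use wQ Qw T in auto)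
        then have TH: "T \<in> Hlevel ?U (\<subseteq>) 2" unfolding Hlevel_def using T(1) by (simp add: numeral_eq_enat)
        show "T \<in> {u}"
        proof (rule ccontr)
          assume "T \<notin> {u}"
          then have "T \<in> F" unfolding F_def using TH by auto
          then show False using xF xQ T(2) by auto
        qed
      qed
    qed
    have downs: "downset ?U (\<subseteq>) Q - {Q} = {w}"
    proof
      show "{w} \<subseteq> downset ?U (\<subseteq>) Q - {Q}" unfolding downset_def using w wQ Qw by auto
      show "downset ?U (\<subseteq>) Q - {Q} \<subseteq> {w}"
      proof
        fix T assume "T \<in> downset ?U (\<subseteq>) Q - {Q}"
        then have T: "T \<in> ?U" "T \<subseteq> Q" "T \<noteq> Q" unfolding downset_def by auto
        show "T \<in> {w}"
        proof (rule ccontr)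
          assume Tw: "T \<notin> {w}"
          have Tmin: "T \<in> minset ?U (\<subseteq>)"
          proof -
            have "T' = T" if "T' \<in> ?U" "T' \<subseteq> T" for T'
            proof (rule ccontr)
              assume "T' \<noteq> T"
              show False by (rule no4[OF d2 that(1) T(1) QU u]) (use T Qu that \<open>T' \<noteq> T\<close> in auto)
            qed
            then show ?thesis unfolding minset_def using T(1) by simp
          qed
          have Qmub: "Q \<in> mub ?U (\<subseteq>) {w, T}"
          proof -
            have "W' = Q" if W': "W' \<in> ?U" "w \<subseteq> W'" "T \<subseteq> W'" "W' \<subseteq> Q" for W'
            proof (rule ccontr)
              assume "W' \<noteq> Q"
              have "W' \<noteq> w"
              proof
                assume "W' = w"
                then have "T = w" using wmin[OF T(1)] W'(3) by simp
                then show False using Tw by simp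
              qed
              then have W'w: "W' \<noteq> w" .
              show False by (rule no4[OF d2 w W'(1) QU u]) (use W' \<open>W' \<noteq> Q\<close> W'w Qu in auto)
            qed
            then show ?thesis unfolding mub_def minset_def using QU wQ T(2) by auto
          qed
          have "T \<in> minset ?U (\<subseteq>) - {w}" using Tmin Tw by simp
          then have "Q \<in> Ms" unfolding Ms_def using Qmub by (rule UN_I)
          then have "Q \<in> F" unfolding F_def using Qu by auto
          then show False using xF xQ by auto
        qed
      qed
    qed
    have "Q \<in> ?B" unfolding between_def using QU ups downs by simp
    then have "Q \<in> F" unfolding F_def by auto
    then show False using xF xQ by auto
  qed
  show ?thesis unfolding K_poset_def
    using d2 minset_finite finH mubs cond3 by blast
qed

end

theorem theorem4p2:
  fixes R :: "('a, 'b) ring_scheme"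
  assumes "cring R"
    and "noetherian_ring R"
    and "krull_dim R = 2"
    and "finite {P \<in> Spec R. pheight (Spec R) (\<subseteq>) P = 2}"
  shows "K_poset (Spec R) (\<subseteq>)"
proof -
  interpret cnr R using assms(1,2) unfolding cnr_def by simp
  show ?thesis using main assms(3,4) unfolding krull_dim_def by blast
qed


end
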